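(* Let $\lambda=\lambda(n)=\Theta(\log n)$, $\lambda\in[1..n]$. Consider the following hyper-heuristic maximizing $\mathrm{OneMax}$ on $\{0,1\}^n$. It keeps a single individual $x$, initialized uniformly at random. In each iteration it performs either one iteration of the $(1+1)$ EA or one iteration of the $(1+(\lambda,\lambda))$ GA with population size $\lambda$ on $x$, chosen as follows: the first iteration is a $(1+1)$ EA iteration; in every later iteration, if none of the previous $\lambda$ iterations produced a strict fitness improvement of $x$, it performs a $(1+(\lambda,\lambda))$ GA iteration, and otherwise a $(1+1)$ EA iteration. (Equivalently: on each fitness value it performs up to $\lambda$ iterations of the $(1+1)$ EA, and if none of them improves the fitness it performs $(1+(\lambda,\lambda))$ GA iterations until an improvement is found.) Then the expected number of fitness evaluations until the optimum $1^n$ is found is $O(n\log\log n)$.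
   Context: $\mathrm{OneMax}(x)=\sum_{i=1}^n x_i$, optimum $1^n$. A $(1+1)$ EA iteration on $x$: create one offspring by flipping each bit independently with probability $1/n$ and replace $x$ by it if its fitness is at least $f(x)$; cost 1 evaluation. A $(1+(\lambda,\lambda))$ GA iteration on $x$: sample $\ell\sim\mathrm{Bin}(n,\lambda/n)$, create $\lambda$ offspring independently each by flipping exactly $\ell$ uniformly random distinct positions of $x$, let $x'$ be a best one (ties uniformly at random); create $\lambda$ offspring independently, each taking per position the bit of $x'$ with probability $1/\lambda$ and the bit of $x$ otherwise; let $y$ be a best one; set $x\gets y$ if $f(y)\ge f(x)$; cost $2\lambda$ evaluations. *)

theory Defs
  imports "HOL-Probability.Probability" "HOL-Library.Landau_Symbols"
begin

definition onemax :: "bool list \<Rightarrow> nat" where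
  "onemax xs = length (filter id xs)"

fun pick_list :: "real \<Rightarrow> ('a \<times> 'a) list \<Rightarrow> 'a list pmf" where
  "pick_list p [] = return_pmf []"
| "pick_list p ((a,b) # r) =
     bind_pmf (bernoulli_pmf p) (\<lambda>c. bind_pmf (pick_list p r) (\<lambda>t.
       return_pmf ((if c then b else a) # t)))"

definition flip_each :: "real \<Rightarrow> bool list \<Rightarrow> bool list pmf" where
  "flip_each p xs = pick_list p (map (\<lambda>b. (b, \<not> b)) xs)"

definition crossover :: "real \<Rightarrow> bool list \<Rightarrow> bool list \<Rightarrow> bool list pmf" where
  "crossover p x y = pick_list p (zip x y)"

definition flip_exactly :: "nat \<Rightarrow> bool list \<Rightarrow> bool list pmf" where
  "flip_exactly l xs =
     map_pmf (\<lambda>S. map (\<lambda>i. if i \<in> S then \<not> xs ! i else xs ! i) [0..<length xs])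
       (pmf_of_set {S. S \<subseteq> {..<length xs} \<and> card S = l})"

fun iid_list :: "nat \<Rightarrow> 'a pmf \<Rightarrow> 'a list pmf" where
  "iid_list 0 p = return_pmf []"
| "iid_list (Suc k) p =
     bind_pmf p (\<lambda>a. bind_pmf (iid_list k p) (\<lambda>as. return_pmf (a # as)))"

definition best_of :: "bool list list \<Rightarrow> bool list pmf" where
  "best_of ys = map_pmf (\<lambda>i. ys ! i)
     (pmf_of_set {i. i < length ys \<and> onemax (ys ! i) = Max (onemax ` set ys)})"

text \<open>One iteration of the (1+1) EA (cost 1 evaluation).\<close>
definition ea_iter :: "nat \<Rightarrow> bool list \<Rightarrow> bool list pmf" where
  "ea_iter n x = map_pmf (\<lambda>y. if onemax y \<ge> onemax x then y else x)
                   (flip_each (1 / real n) x)"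

text \<open>One iteration of the (1+(lambda,lambda)) GA (cost 2 lambda evaluations).\<close>
definition ga_iter :: "nat \<Rightarrow> nat \<Rightarrow> bool list \<Rightarrow> bool list pmf" where
  "ga_iter n lam x =
     bind_pmf (binomial_pmf n (real lam / real n)) (\<lambda>l.
     bind_pmf (bind_pmf (iid_list lam (flip_exactly l x)) best_of) (\<lambda>x'.
     bind_pmf (bind_pmf (iid_list lam (crossover (1 / real lam) x x')) best_of) (\<lambda>y.
     return_pmf (if onemax y \<ge> onemax x then y else x))))"

text \<open>Hyper-heuristic state: current individual and the number c of consecutive
  iterations without strict fitness improvement since the last improvement
  (or since initialization), capped at lam.\<close>
definition hh_step :: "nat \<Rightarrow> nat \<Rightarrow> bool list \<times> nat \<Rightarrow> (bool list \<times> nat) pmf" where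
  "hh_step n lam s = (case s of (x, c) \<Rightarrow>
     map_pmf (\<lambda>y. (y, if onemax y > onemax x then 0 else min lam (Suc c)))
       (if c < lam then ea_iter n x else ga_iter n lam x))"

definition hh_cost :: "nat \<Rightarrow> bool list \<times> nat \<Rightarrow> nat" where
  "hh_cost lam s = (if snd s < lam then 1 else 2 * lam)"

definition hh_dist :: "nat \<Rightarrow> nat \<Rightarrow> nat \<Rightarrow> (bool list \<times> nat) pmf" where
  "hh_dist n lam t =
     ((\<lambda>d. bind_pmf d (hh_step n lam)) ^^ t)
       (map_pmf (\<lambda>x. (x, 0)) (pmf_of_set {xs. length xs = n}))"

definition hh_runtime :: "nat \<Rightarrow> nat \<Rightarrow> ennreal" where
  "hh_runtime n lam =
     (\<Sum>t. \<integral>\<^sup>+ s. (if onemax (fst s) = n then 0 else ennreal (real (hh_cost lam s)))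
             \<partial>measure_pmf (hh_dist n lam t))"

end

theory Submission
  imports Defs
begin


lemma iid_list_replicate: "iid_list k p = replicate_pmf k p"
  by (induction k) auto

lemma set_pmf_iid_list: "set_pmf (iid_list k p) = {xs\<in>lists (set_pmf p). length xs = k}"
  by (simp add: iid_list_replicate set_replicate_pmf)

lemma pick_list_Cons: "pick_list p ((a,b) # r) =
  bind_pmf (bernoulli_pmf p) (\<lambda>c. map_pmf (Cons (if c then b else a)) (pick_list p r))"
  by (simp add: map_pmf_def)

lemma length_pick_list: "ys \<in> set_pmf (pick_list p ps) \<Longrightarrow> length ys = length ps"
proof (induction ps arbitrary: ys)
  case Nil
  then show ?case by simp
next
  case (Cons ab r)
  obtain a b where ab: "ab = (a,b)" by (cases ab)
  show ?case using Cons.prems Cons.IH unfolding ab pick_list_Cons by auto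
qed

definition plw :: "real \<Rightarrow> ('a \<times> 'a) \<Rightarrow> 'a \<Rightarrow> real" where
  "plw p ab y = (if y = snd ab then p else 0) + (if y = fst ab then 1 - p else 0)"

lemma pmf_pick_list:
  assumes "0 \<le> p" "p \<le> 1"
  shows "pmf (pick_list p ps) ys =
    (if length ys = length ps then (\<Prod>i<length ps. plw p (ps!i) (ys!i)) else 0)"
proof (induction ps arbitrary: ys)
  case Nil
  then show ?case by (auto simp: indicator_def)
next
  case (Cons ab r)
  obtain a b where ab: "ab = (a,b)" by (cases ab)
  show ?case
  proof (cases ys)
    case Nil
    then show ?thesis using length_pick_list[of ys p "ab # r"]
      by (auto simp: set_pmf_iff)
  next
    case (Cons y ys')
    have F: "pmf (map_pmf (Cons h) (pick_list p r)) (y # ys') =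
        (if y = h then pmf (pick_list p r) ys' else 0)" for h
    proof (cases "y = h")
      case True
      then show ?thesis by (simp add: pmf_map_inj')
    next
      case False
      then have "y # ys' \<notin> set_pmf (map_pmf (Cons h) (pick_list p r))" by auto
      then show ?thesis using False by (metis set_pmf_iff)
    qed
    have "pmf (pick_list p (ab # r)) ys =
        p * (if y = b then pmf (pick_list p r) ys' else 0)
        + (1 - p) * (if y = a then pmf (pick_list p r) ys' else 0)"
      unfolding ab pick_list_Cons Cons pmf_bind using assms
      by (simp add: F algebra_simps)
    also have "\<dots> = plw p (a,b) y * pmf (pick_list p r) ys'"
      by (simp add: plw_def algebra_simps)
    finally show ?thesis
      using Cons.IH[of ys'] unfolding Cons ab
      by (simp add: prod.lessThan_Suc_shift del: prod.lessThan_Suc)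
  qed
qed


lemma pmf_flip_each_point:
  assumes "0 \<le> p" "p \<le> 1" "j < length x"
  shows "pmf (flip_each p x) (x[j := \<not> x!j]) = p * (1 - p) ^ (length x - 1)"
proof -
  let ?n = "length x"
  have "pmf (flip_each p x) (x[j := \<not> x!j]) =
     (\<Prod>i<?n. plw p ((x!i, \<not> x!i)) (x[j := \<not> x!j] ! i))"
    unfolding flip_each_def using assms by (simp add: pmf_pick_list)
  also have "\<dots> = (\<Prod>i<?n. if i = j then p else 1 - p)"
    by (intro prod.cong) (auto simp: plw_def)
  also have "\<dots> = p * (\<Prod>i\<in>{..<?n} - {j}. 1 - p)"
    using assms(3) by (subst prod.remove[of _ j]) auto
  also have "\<dots> = p * (1 - p) ^ (?n - 1)"
    using assms(3) by simp
  finally show ?thesis .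
qed

lemma pmf_crossover_point:
  assumes "0 \<le> p" "p \<le> 1" "j < length x" "length x' = length x" "x!j \<noteq> x'!j"
  shows "pmf (crossover p x x') (x[j := x'!j]) =
     p * (1 - p) ^ (card {i. i < length x \<and> x!i \<noteq> x'!i} - 1)"
proof -
  let ?n = "length x"
  let ?D = "{i. i < length x \<and> x!i \<noteq> x'!i}"
  have "pmf (crossover p x x') (x[j := x'!j]) =
     (\<Prod>i<?n. plw p ((x!i, x'!i)) (x[j := x'!j] ! i))"
    unfolding crossover_def using assms by (simp add: pmf_pick_list)
  also have "\<dots> = (\<Prod>i<?n. if i = j then p else (if x!i = x'!i then 1 else 1 - p))"
    using assms by (intro prod.cong) (auto simp: plw_def)
  also have "\<dots> = p * (\<Prod>i\<in>{..<?n} - {j}. (if x!i = x'!i then 1 else 1 - p))"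
    using assms(3) by (subst prod.remove[of _ j]) auto
  also have "(\<Prod>i\<in>{..<?n} - {j}. (if x!i = x'!i then 1 else 1 - p)) =
       (\<Prod>i\<in>?D - {j}. 1 - p)"
    by (rule prod.mono_neutral_cong_right) auto
  also have "\<dots> = (1 - p) ^ (card ?D - 1)"
    using assms by simp
  finally show ?thesis .
qed


lemma length_flip_each: "y \<in> set_pmf (flip_each p x) \<Longrightarrow> length y = length x"
  unfolding flip_each_def by (drule length_pick_list) simp

lemma length_crossover: "y \<in> set_pmf (crossover p x x') \<Longrightarrow> length x' = length x \<Longrightarrow> length y = length x"
  unfolding crossover_def by (drule length_pick_list) simp

lemma set_ea_iter: "y \<in> set_pmf (ea_iter n x) \<Longrightarrow> length y = length x \<and> onemax x \<le> onemax y"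
  unfolding ea_iter_def by (auto dest: length_flip_each)

lemma best_of_set:
  assumes "ys \<noteq> []"
  shows "finite {i. i < length ys \<and> onemax (ys ! i) = Max (onemax ` set ys)}"
    "{i. i < length ys \<and> onemax (ys ! i) = Max (onemax ` set ys)} \<noteq> {}"
proof -
  show "finite {i. i < length ys \<and> onemax (ys ! i) = Max (onemax ` set ys)}" by simp
  have "Max (onemax ` set ys) \<in> onemax ` set ys" using assms by (intro Max_in) auto
  then obtain z where "z \<in> set ys" "onemax z = Max (onemax ` set ys)" by auto
  then obtain i where "i < length ys" "ys ! i = z" by (auto simp: in_set_conv_nth)
  then show "{i. i < length ys \<and> onemax (ys ! i) = Max (onemax ` set ys)} \<noteq> {}"
    using \<open>onemax z = _\<close> by auto
qed

lemma set_best_of: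
  assumes "ys \<noteq> []" "y \<in> set_pmf (best_of ys)"
  shows "y \<in> set ys" "\<And>z. z \<in> set ys \<Longrightarrow> onemax z \<le> onemax y"
proof -
  from assms obtain i where i: "i < length ys" "onemax (ys ! i) = Max (onemax ` set ys)" "y = ys ! i"
    unfolding best_of_def using best_of_set[OF assms(1)] by auto
  show "y \<in> set ys" using i by simp
  fix z assume "z \<in> set ys"
  then show "onemax z \<le> onemax y" using i by simp
qed

lemma set_flip_exactly:
  assumes "l \<le> length x"
  shows "set_pmf (flip_exactly l x) =
    (\<lambda>S. map (\<lambda>i. if i \<in> S then \<not> x ! i else x ! i) [0..<length x]) `
      {S. S \<subseteq> {..<length x} \<and> card S = l}"
proof -
  have "finite {S. S \<subseteq> {..<length x} \<and> card S = l}"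
    by (rule finite_subset[of _ "Pow {..<length x}"]) auto
  moreover have "{S. S \<subseteq> {..<length x} \<and> card S = l} \<noteq> {}"
    using assms by (metis (mono_tags, lifting) card_lessThan empty_iff mem_Collect_eq
        obtain_subset_with_card_n)
  ultimately show ?thesis unfolding flip_exactly_def by simp
qed

lemma flip_exactly_elem:
  assumes "l \<le> length x" "m \<in> set_pmf (flip_exactly l x)"
  shows "length m = length x" "card {i. i < length x \<and> x!i \<noteq> m!i} = l"
proof -
  from assms obtain S where S: "S \<subseteq> {..<length x}" "card S = l"
    "m = map (\<lambda>i. if i \<in> S then \<not> x ! i else x ! i) [0..<length x]"
    using set_flip_exactly by auto
  show "length m = length x" using S by simp
  have "{i. i < length x \<and> x!i \<noteq> m!i} = S" using S by auto
  then show "card {i. i < length x \<and> x!i \<noteq> m!i} = l" using S by simp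
qed

lemma set_ga_iter:
  assumes "y \<in> set_pmf (ga_iter n lam x)" "1 \<le> lam" "lam \<le> n" "length x = n"
  shows "length y = length x \<and> onemax x \<le> onemax y"
proof -
  have p: "real lam / real n \<in> {0..1}" using assms by auto
  from assms(1) obtain l x' z where
    l: "l \<in> set_pmf (binomial_pmf n (real lam / real n))" and
    x': "x' \<in> set_pmf (bind_pmf (iid_list lam (flip_exactly l x)) best_of)" and
    z: "z \<in> set_pmf (bind_pmf (iid_list lam (crossover (1 / real lam) x x')) best_of)" and
    y: "y = (if onemax z \<ge> onemax x then z else x)"
    unfolding ga_iter_def by auto
  have "l \<le> n" using l p by (auto simp: set_pmf_binomial_eq split: if_splits)
  from x' obtain ms where ms: "ms \<in> set_pmf (iid_list lam (flip_exactly l x))" "x' \<in> set_pmf (best_of ms)"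
    by auto
  have "ms \<noteq> []" "length ms = lam" using ms assms(2) by (auto simp: set_pmf_iid_list)
  then have "x' \<in> set ms" using set_best_of ms by blast
  then have "length x' = length x" using ms \<open>l \<le> n\<close> assms
    by (auto simp: set_pmf_iid_list dest: flip_exactly_elem)
  from z obtain cs where cs: "cs \<in> set_pmf (iid_list lam (crossover (1 / real lam) x x'))"
     "z \<in> set_pmf (best_of cs)" by auto
  have "cs \<noteq> []" using cs assms(2) by (auto simp: set_pmf_iid_list)
  then have "z \<in> set cs" using set_best_of cs by blast
  then have "length z = length x" using cs \<open>length x' = length x\<close>
    by (auto simp: set_pmf_iid_list dest: length_crossover)
  then show ?thesis using y by auto
qed



lemma prob_bind_ge:
  assumes "\<And>x. x \<in> set_pmf M \<Longrightarrow> x \<in> B \<Longrightarrow> c \<le> measure_pmf.prob (N x) A" "0 \<le> c"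
  shows "c * measure_pmf.prob M B \<le> measure_pmf.prob (bind_pmf M N) A"
proof -
  have "ennreal (c * measure_pmf.prob M B) = (\<integral>\<^sup>+x. ennreal c * indicator B x \<partial>M)"
    using assms(2) by (simp add: ennreal_mult measure_pmf.emeasure_eq_measure nn_integral_cmult_indicator)
  also have "\<dots> \<le> (\<integral>\<^sup>+x. emeasure (N x) A \<partial>M)"
    apply (intro nn_integral_mono_AE)
    using assms(1) by (auto simp: AE_measure_pmf_iff indicator_def measure_pmf.emeasure_eq_measure)
  also have "\<dots> = emeasure (bind_pmf M N) A" by simp
  finally show ?thesis
    by (simp add: measure_pmf.emeasure_eq_measure)
qed

lemma emeasure_iid_list_lists: "emeasure (iid_list k M) (lists A) = emeasure M A ^ k"
proof (induction k)
  case 0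
  then show ?case by simp
next
  case (Suc k)
  have "emeasure (iid_list (Suc k) M) (lists A) =
    (\<integral>\<^sup>+a. (\<integral>\<^sup>+as. indicator (lists A) (a # as) \<partial>iid_list k M) \<partial>M)"
    by simp
  also have "\<dots> = (\<integral>\<^sup>+a. indicator A a * emeasure M A ^ k \<partial>M)"
  proof (intro nn_integral_cong)
    fix a
    have "(\<integral>\<^sup>+as. indicator (lists A) (a # as) \<partial>iid_list k M) =
       (\<integral>\<^sup>+as. indicator A a * indicator (lists A) as \<partial>iid_list k M)"
      by (intro nn_integral_cong) (simp add: indicator_def)
    also have "\<dots> = indicator A a * emeasure M A ^ k"
      by (simp add: nn_integral_cmult Suc)
    finally show "(\<integral>\<^sup>+as. indicator (lists A) (a # as) \<partial>iid_list k M) = indicator A a * emeasure M A ^ k" .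
  qed
  also have "\<dots> = emeasure M A ^ Suc k"
    by (simp add: nn_integral_multc mult.commute)
  finally show ?case .
qed

lemma prob_iid_list_lists: "measure_pmf.prob (iid_list k M) (lists A) = measure_pmf.prob M A ^ k"
  using emeasure_iid_list_lists[of k M A]
  by (simp add: measure_pmf.emeasure_eq_measure ennreal_power)

lemma prob_compl': "measure_pmf.prob M (- A) = 1 - measure_pmf.prob M A"
  using measure_pmf.prob_compl[of A M] by (simp add: Compl_eq_Diff_UNIV)

lemma prob_iid_exists:
  "measure_pmf.prob (iid_list k M) {as. \<exists>a\<in>set as. a \<in> A} = 1 - (1 - measure_pmf.prob M A) ^ k"
proof -
  have "{as. \<exists>a\<in>set as. a \<in> A} = - lists (- A)" by auto
  then have "measure_pmf.prob (iid_list k M) {as. \<exists>a\<in>set as. a \<in> A} =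
      1 - measure_pmf.prob (iid_list k M) (lists (- A))"
    by (simp add: prob_compl')
  also have "\<dots> = 1 - (1 - measure_pmf.prob M A) ^ k"
    by (simp add: prob_iid_list_lists prob_compl')
  finally show ?thesis .
qed

lemma onemax_card: "onemax x = card {i. i < length x \<and> x ! i}"
  unfolding onemax_def by (simp add: length_filter_conv_card)

lemma onemax_updown:
  assumes "length m = length x"
  shows "onemax m + card {i. i < length x \<and> x!i \<and> \<not> m!i} =
         onemax x + card {i. i < length x \<and> \<not> x!i \<and> m!i}"
proof -
  let ?n = "length x"
  have a: "{i. i < ?n \<and> m ! i} = {i. i < ?n \<and> x!i \<and> m!i} \<union> {i. i < ?n \<and> \<not> x!i \<and> m!i}" by auto
  have b: "{i. i < ?n \<and> x ! i} = {i. i < ?n \<and> x!i \<and> m!i} \<union> {i. i < ?n \<and> x!i \<and> \<not> m!i}" by auto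
  have "card {i. i < ?n \<and> m ! i} = card {i. i < ?n \<and> x!i \<and> m!i} + card {i. i < ?n \<and> \<not> x!i \<and> m!i}"
    unfolding a by (rule card_Un_disjoint) auto
  moreover have "card {i. i < ?n \<and> x ! i} = card {i. i < ?n \<and> x!i \<and> m!i} + card {i. i < ?n \<and> x!i \<and> \<not> m!i}"
    unfolding b by (rule card_Un_disjoint) auto
  ultimately show ?thesis using assms by (simp add: onemax_card)
qed

lemma card_diff_updown:
  "card {i. i < length x \<and> x!i \<noteq> m!i} =
   card {i. i < length x \<and> x!i \<and> \<not> m!i} + card {i. i < length x \<and> \<not> x!i \<and> m!i}"
proof -
  have "{i. i < length x \<and> x!i \<noteq> m!i} =
    {i. i < length x \<and> x!i \<and> \<not> m!i} \<union> {i. i < length x \<and> \<not> x!i \<and> m!i}" by auto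
  then show ?thesis by (subst card_Un_disjoint[symmetric]) auto
qed



lemma card_zeros: "card {i. i < length x \<and> \<not> x!i} = length x - onemax x"
proof -
  have "{..<length x} = {i. i < length x \<and> x!i} \<union> {i. i < length x \<and> \<not> x!i}" by auto
  moreover have "card ({i. i < length x \<and> x!i} \<union> {i. i < length x \<and> \<not> x!i}) =
      card {i. i < length x \<and> x!i} + card {i. i < length x \<and> \<not> x!i}"
    by (rule card_Un_disjoint) auto
  ultimately have "length x = card {i. i < length x \<and> x!i} + card {i. i < length x \<and> \<not> x!i}"
    by (metis card_lessThan)
  then show ?thesis by (simp add: onemax_card)
qed

lemma onemax_le_length: "onemax x \<le> length x"
  unfolding onemax_def by simp

lemma onemax_set_true:
  assumes "j < length x" "\<not> x!j"
  shows "onemax (x[j := True]) = Suc (onemax x)"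
proof -
  have "onemax (x[j := True]) + card {i. i < length x \<and> x!i \<and> \<not> (x[j := True])!i} =
        onemax x + card {i. i < length x \<and> \<not> x!i \<and> (x[j := True])!i}"
    by (rule onemax_updown) simp
  moreover have "{i. i < length x \<and> x!i \<and> \<not> (x[j := True])!i} = {}"
    using assms by (auto simp: nth_list_update)
  moreover have "{i. i < length x \<and> \<not> x!i \<and> (x[j := True])!i} = {j}"
    using assms by (auto simp: nth_list_update split: if_splits)
  ultimately show ?thesis by simp
qed

lemma ea_improve:
  assumes "length x = n" "1 \<le> n"
  shows "real (n - onemax x) * ((1 / real n) * (1 - 1 / real n) ^ (n - 1))
     \<le> measure_pmf.prob (ea_iter n x) {y. onemax x < onemax y}"
proof -
  let ?p = "1 / real n"
  let ?Z = "{j. j < length x \<and> \<not> x!j}"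
  let ?F = "(\<lambda>j. x[j := True]) ` ?Z"
  have p: "0 \<le> ?p" "?p \<le> 1" using assms by auto
  have inj: "inj_on (\<lambda>j. x[j := True]) ?Z"
  proof (rule inj_onI)
    fix j k assume "j \<in> ?Z" "k \<in> ?Z" "x[j := True] = x[k := True]"
    then have "(x[j := True]) ! j = (x[k := True]) ! j" by simp
    then show "j = k" using \<open>j \<in> ?Z\<close> by (cases "j = k") (auto simp: nth_list_update)
  qed
  have "measure_pmf.prob (flip_each ?p x) ?F = (\<Sum>y\<in>?F. pmf (flip_each ?p x) y)"
    by (rule measure_measure_pmf_finite) simp
  also have "\<dots> = (\<Sum>j\<in>?Z. pmf (flip_each ?p x) (x[j := True]))"
    using inj by (simp add: sum.reindex)
  also have "\<dots> = (\<Sum>j\<in>?Z. ?p * (1 - ?p) ^ (n - 1))"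
  proof (intro sum.cong refl)
    fix j assume j: "j \<in> ?Z"
    then have "x[j := True] = x[j := \<not> x!j]" by simp
    then show "pmf (flip_each ?p x) (x[j := True]) = ?p * (1 - ?p) ^ (n - 1)"
      using pmf_flip_each_point[OF p, of j x] j assms by simp
  qed
  also have "\<dots> = real (n - onemax x) * (?p * (1 - ?p) ^ (n - 1))"
    using card_zeros[of x] assms by simp
  finally have eq: "measure_pmf.prob (flip_each ?p x) ?F = real (n - onemax x) * (?p * (1 - ?p) ^ (n - 1))" .
  have sub: "?F \<subseteq> (\<lambda>y. if onemax x \<le> onemax y then y else x) -` {y. onemax x < onemax y}"
  proof
    fix y assume "y \<in> ?F"
    then obtain j where j: "j \<in> ?Z" "y = x[j := True]" by blast
    then have "onemax y = Suc (onemax x)" using onemax_set_true by simp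
    then show "y \<in> (\<lambda>y. if onemax x \<le> onemax y then y else x) -` {y. onemax x < onemax y}" by simp
  qed
  show ?thesis
    unfolding ea_iter_def measure_map_pmf eq[symmetric]
    by (rule measure_pmf.finite_measure_mono[OF sub]) simp
qed



lemma choose_Suc_rel: "real (Suc l) * real (k choose Suc l) = real (k - l) * real (k choose l)"
proof -
  have "Suc l * (k choose Suc l) = k * ((k - 1) choose l)" by (rule binomial_absorption)
  also have "\<dots> = (k - l) * (k choose l)" by (rule binomial_absorb_comp[symmetric])
  finally show ?thesis by (metis of_nat_mult)
qed

lemma choose_ratio:
  assumes "m \<le> n"
  shows "real (m choose l) * real n ^ l \<le> real (n choose l) * real m ^ l"
proof (induction l)
  case 0
  then show ?case by simp
next
  case (Suc l)
  have key: "real (m - l) * real n \<le> real (n - l) * real m"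
  proof (cases "l \<le> m")
    case True
    then have "real (m - l) = real m - real l" "real (n - l) = real n - real l" using assms by auto
    then show ?thesis using assms True by (simp add: algebra_simps mult_left_mono)
  next
    case False
    then show ?thesis by simp
  qed
  have "real (Suc l) * (real (m choose Suc l) * real n ^ Suc l) =
      real n ^ Suc l * (real (Suc l) * real (m choose Suc l))" by (simp only: mult_ac)
  also have "\<dots> = real n ^ Suc l * (real (m - l) * real (m choose l))" by (simp only: choose_Suc_rel)
  also have "\<dots> = (real (m - l) * real n) * (real (m choose l) * real n ^ l)" by (simp add: mult_ac)
  also have "\<dots> \<le> (real (n - l) * real m) * (real (n choose l) * real m ^ l)"
    by (intro mult_mono key Suc) auto
  also have "\<dots> = real m ^ Suc l * (real (n - l) * real (n choose l))" by (simp add: mult_ac)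
  also have "\<dots> = real m ^ Suc l * (real (Suc l) * real (n choose Suc l))" by (simp only: choose_Suc_rel)
  also have "\<dots> = real (Suc l) * (real (n choose Suc l) * real m ^ Suc l)" by (simp only: mult_ac)
  finally show ?case by (simp del: of_nat_Suc)
qed

definition bad :: "bool list \<Rightarrow> bool list set" where
  "bad x = {m. \<forall>i<length x. \<not> x!i \<longrightarrow> \<not> m!i}"

lemma prob_bad_flip_exactly:
  assumes "l \<le> length x" "length x = n" "1 \<le> n"
  shows "measure_pmf.prob (flip_exactly l x) (bad x) \<le> (1 - real (n - onemax x) / real n) ^ l"
proof -
  let ?Subs = "{S. S \<subseteq> {..<length x} \<and> card S = l}"
  let ?f = "\<lambda>S. map (\<lambda>i. if i \<in> S then \<not> x ! i else x ! i) [0..<length x]"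
  let ?O = "{i. i < length x \<and> x!i}"
  have fin: "finite ?Subs" by (rule finite_subset[of _ "Pow {..<length x}"]) auto
  have ne: "?Subs \<noteq> {}"
    using assms by (metis (mono_tags, lifting) card_lessThan empty_iff mem_Collect_eq
        obtain_subset_with_card_n)
  have cS: "card ?Subs = n choose l" using n_subsets[of "{..<length x}" l] assms by simp
  have eq: "?Subs \<inter> ?f -` bad x = {S. S \<subseteq> ?O \<and> card S = l}"
  proof (intro equalityI subsetI)
    fix S assume "S \<in> ?Subs \<inter> ?f -` bad x"
    then have S: "S \<subseteq> {..<length x}" "card S = l" "\<forall>i<length x. \<not> x!i \<longrightarrow> \<not> ?f S ! i"
      by (auto simp: bad_def)
    have "S \<subseteq> ?O"
    proof
      fix i assume "i \<in> S"
      then have "i < length x" using S by auto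
      then show "i \<in> ?O" using S(3) \<open>i \<in> S\<close> by auto
    qed
    then show "S \<in> {S. S \<subseteq> ?O \<and> card S = l}" using S by auto
  next
    fix S assume "S \<in> {S. S \<subseteq> ?O \<and> card S = l}"
    then show "S \<in> ?Subs \<inter> ?f -` bad x" by (auto simp: bad_def)
  qed
  have cO: "card ?O = onemax x" by (simp add: onemax_card)
  have "measure_pmf.prob (flip_exactly l x) (bad x) = real (card {S. S \<subseteq> ?O \<and> card S = l}) / real (card ?Subs)"
    unfolding flip_exactly_def measure_map_pmf using fin ne eq
    by (simp add: measure_pmf_of_set)
  also have "\<dots> = real (onemax x choose l) / real (n choose l)"
    using cS cO n_subsets[of ?O l] by simp
  also have "\<dots> \<le> (real (onemax x) / real n) ^ l"
  proof -
    have "onemax x \<le> n" using onemax_le_length assms by metis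
    then have "real (onemax x choose l) * real n ^ l \<le> real (n choose l) * real (onemax x) ^ l"
      by (rule choose_ratio)
    moreover have "real (n choose l) > 0" using assms by simp
    moreover have "real n ^ l > 0" using assms by simp
    ultimately show ?thesis by (simp add: field_simps power_divide)
  qed
  also have "real (onemax x) / real n = 1 - real (n - onemax x) / real n"
    using assms onemax_le_length[of x] by (simp add: field_simps of_nat_diff)
  finally show ?thesis .
qed



lemma binomial_mgf:
  assumes "0 \<le> p" "p \<le> 1"
  shows "measure_pmf.expectation (binomial_pmf n p) (\<lambda>l. t ^ l) = (p * t + (1 - p)) ^ n"
proof -
  have "measure_pmf.expectation (binomial_pmf n p) (\<lambda>l. t ^ l) =
     (\<Sum>k\<le>n. real (n choose k) * (p * t) ^ k * (1 - p) ^ (n - k))"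
    using assms by (subst expectation_binomial_pmf') (auto simp: power_mult_distrib mult_ac)
  also have "\<dots> = (p * t + (1 - p)) ^ n"
    by (subst binomial_ring) (simp add: atLeast0AtMost)
  finally show ?thesis .
qed

lemma prob_le_expectation_binomial:
  assumes "0 \<le> p" "p \<le> 1" "\<And>l. l \<in> A \<Longrightarrow> 1 \<le> f l" "\<And>l. 0 \<le> f l"
  shows "measure_pmf.prob (binomial_pmf n p) A \<le> measure_pmf.expectation (binomial_pmf n p) f"
proof -
  have "measure_pmf.prob (binomial_pmf n p) A = measure_pmf.expectation (binomial_pmf n p) (indicator A)"
    by simp
  also have "\<dots> \<le> measure_pmf.expectation (binomial_pmf n p) f"
    using assms by (intro integral_mono) (auto simp: indicator_def)
  finally show ?thesis .
qed

lemma one_minus_pow_le_exp: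
  assumes "0 \<le> a" "a \<le> 1"
  shows "(1 - a) ^ k \<le> exp (- (a * real k))"
proof -
  have "(1 - a) ^ k \<le> exp (- a) ^ k"
    using assms exp_ge_add_one_self[of "-a"] by (intro power_mono) auto
  also have "\<dots> = exp (- (a * real k))" by (simp add: exp_of_nat_mult[symmetric] mult_ac)
  finally show ?thesis .
qed

lemma binomial_lower_tail:
  assumes "1 \<le> lam" "lam \<le> n"
  shows "measure_pmf.prob (binomial_pmf n (real lam / real n)) {l. 8 * l < lam} \<le> exp (- 3 * real lam / 8)"
proof -
  let ?p = "real lam / real n"
  have p: "0 \<le> ?p" "?p \<le> 1" using assms by auto
  have "measure_pmf.prob (binomial_pmf n ?p) {l. 8 * l < lam} \<le>
     measure_pmf.expectation (binomial_pmf n ?p) (\<lambda>l. exp (real lam / 8) * exp (-1) ^ l)"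
  proof (rule prob_le_expectation_binomial[OF p])
    fix l assume "l \<in> {l. 8 * l < lam}"
    then have "real l \<le> real lam / 8" by simp
    then show "1 \<le> exp (real lam / 8) * exp (-1) ^ l"
      by (simp add: exp_of_nat_mult[symmetric] exp_add[symmetric])
  qed simp
  also have "\<dots> = exp (real lam / 8) * (?p * exp (-1) + (1 - ?p)) ^ n"
    using binomial_mgf[OF p, of n "exp (-1)"] by simp
  also have "\<dots> = exp (real lam / 8) * (1 - ?p * (1 - exp (-1))) ^ n"
  proof -
    have "?p * exp (-1) + (1 - ?p) = 1 - ?p * (1 - exp (-1))" by (simp add: right_diff_distrib)
    then show ?thesis by (rule arg_cong[where f = "\<lambda>z. exp (real lam / 8) * z ^ n"])
  qed
  also have "\<dots> \<le> exp (real lam / 8) * exp (- (?p * (1 - exp (-1)) * real n))"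
  proof -
    have e1: "0 \<le> 1 - exp (-1::real)" "1 - exp (-1) \<le> (1::real)" by auto
    have "0 \<le> ?p * (1 - exp (-1))" using p e1 by simp
    moreover have "?p * (1 - exp (-1)) \<le> 1" using mult_le_one[OF p(2) e1] .
    ultimately have "0 \<le> ?p * (1 - exp (-1))" "?p * (1 - exp (-1)) \<le> 1" by auto
    then show ?thesis by (intro mult_left_mono one_minus_pow_le_exp) auto
  qed
  also have "\<dots> \<le> exp (- 3 * real lam / 8)"
  proof -
    have e: "exp (-1) \<le> (1/2::real)"
      using exp_ge_add_one_self[of 1] by (simp add: exp_minus field_simps)
    have "?p * (1 - exp (-1)) * real n = real lam * (1 - exp (-1))" using assms by simp
    moreover have "real lam * (1 - exp (-1)) \<ge> real lam * (1/2)"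
      using e by (intro mult_left_mono) auto
    ultimately show ?thesis by (simp add: exp_add[symmetric])
  qed
  finally show ?thesis .
qed

lemma binomial_upper_tail:
  assumes "1 \<le> lam" "lam \<le> n"
  shows "measure_pmf.prob (binomial_pmf n (real lam / real n)) {l. 3 * lam < l} \<le> (3/8) ^ lam"
proof -
  let ?p = "real lam / real n"
  have p: "0 \<le> ?p" "?p \<le> 1" using assms by auto
  have "measure_pmf.prob (binomial_pmf n ?p) {l. 3 * lam < l} \<le>
     measure_pmf.expectation (binomial_pmf n ?p) (\<lambda>l. (1/8) ^ lam * 2 ^ l)"
  proof (rule prob_le_expectation_binomial[OF p])
    fix l assume "l \<in> {l. 3 * lam < l}"
    then have "(2::real) ^ (3 * lam) \<le> 2 ^ l" by (intro power_increasing) auto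
    moreover have "(8::real) ^ lam = 2 ^ (3 * lam)" by (simp add: power_mult)
    ultimately show "1 \<le> (1/8::real) ^ lam * 2 ^ l"
      by (simp add: power_mult field_simps)
  qed simp
  also have "\<dots> = (1/8) ^ lam * (?p * 2 + (1 - ?p)) ^ n"
    using binomial_mgf[OF p, of n 2] by simp
  also have "\<dots> = (1/8) ^ lam * (1 + ?p) ^ n"
  proof -
    have "?p * 2 + (1 - ?p) = 1 + ?p" by simp
    then show ?thesis by (rule arg_cong[where f = "\<lambda>z. (1/8) ^ lam * z ^ n"])
  qed
  also have "\<dots> \<le> (1/8) ^ lam * exp (?p * real n)"
  proof -
    have "(1 + ?p) ^ n \<le> exp ?p ^ n"
      using exp_ge_add_one_self[of ?p] p by (intro power_mono) auto
    also have "\<dots> = exp (?p * real n)" by (simp add: exp_of_nat_mult[symmetric] mult_ac)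
    finally show ?thesis by simp
  qed
  also have "\<dots> = (1/8) ^ lam * exp 1 ^ lam"
    using assms by (simp add: exp_of_nat_mult[symmetric])
  also have "\<dots> \<le> (1/8) ^ lam * 3 ^ lam"
    by (intro mult_left_mono power_mono exp_le) auto
  also have "\<dots> = (3/8) ^ lam" by (simp add: power_mult_distrib[symmetric])
  finally show ?thesis .
qed

definition Lset :: "nat \<Rightarrow> nat set" where
  "Lset lam = {l. lam \<le> 8 * l \<and> l \<le> 3 * lam}"

lemma binomial_Lset:
  assumes "8 \<le> lam" "lam \<le> n"
  shows "1/2 \<le> measure_pmf.prob (binomial_pmf n (real lam / real n)) (Lset lam)"
proof -
  let ?M = "binomial_pmf n (real lam / real n)"
  have "- Lset lam = {l. 8 * l < lam} \<union> {l. 3 * lam < l}" by (auto simp: Lset_def)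
  then have "measure_pmf.prob ?M (- Lset lam) \<le>
      measure_pmf.prob ?M {l. 8 * l < lam} + measure_pmf.prob ?M {l. 3 * lam < l}"
    by (simp add: measure_Un_le)
  also have "\<dots> \<le> exp (- 3 * real lam / 8) + (3/8) ^ lam"
    using assms by (intro add_mono binomial_lower_tail binomial_upper_tail) auto
  also have "\<dots> \<le> 1/4 + 1/4"
  proof (intro add_mono)
    have "exp (- 3 * real lam / 8) \<le> exp (-3)" using assms by simp
    also have "exp (-3::real) = inverse (exp 1 ^ 3)"
      by (simp add: exp_minus exp_of_nat_mult[symmetric])
    also have "\<dots> \<le> inverse (2 ^ 3)"
      using exp_ge_add_one_self[of 1] by (intro le_imp_inverse_le power_mono) auto
    finally show "exp (- 3 * real lam / 8) \<le> 1/4" by simp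
    have "(3/8::real) ^ lam \<le> (3/8) ^ 2" using assms by (intro power_decreasing) auto
    also have "(3/8::real) ^ 2 \<le> 1/4" by (simp add: power2_eq_square)
    finally show "(3/8::real) ^ lam \<le> 1/4" .
  qed
  finally show ?thesis by (simp add: prob_compl')
qed



lemma prob_support_1: "set_pmf M \<subseteq> A \<Longrightarrow> measure_pmf.prob M A = 1"
  by (subst measure_pmf.prob_eq_1) (auto simp: AE_measure_pmf_iff)

definition accept :: "bool list \<Rightarrow> bool list \<Rightarrow> bool list" where
  "accept x y = (if onemax y \<ge> onemax x then y else x)"

lemma cross_phase:
  assumes "length x = n" "length x' = n" "j < n" "\<not> x!j" "x'!j"
    "card {i. i < length x \<and> x!i \<noteq> x'!i} = l" "1 \<le> lam"
  shows "1 - (1 - (1 / real lam) * (1 - 1 / real lam) ^ (l - 1)) ^ lam \<le>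
    measure_pmf.prob (bind_pmf (bind_pmf (iid_list lam (crossover (1 / real lam) x x')) best_of)
       (\<lambda>y. return_pmf (if onemax y \<ge> onemax x then y else x))) {y. onemax x < onemax y}"
proof -
  let ?p = "1 / real lam"
  let ?y0 = "x[j := True]"
  let ?C = "crossover ?p x x'"
  have p: "0 \<le> ?p" "?p \<le> 1" using assms by auto
  have y0: "?y0 = x[j := x'!j]" using assms by simp
  have pm: "measure_pmf.prob ?C {?y0} = ?p * (1 - ?p) ^ (l - 1)"
    unfolding measure_pmf_single y0 using pmf_crossover_point[OF p, of j x x'] assms by simp
  have om: "onemax ?y0 = Suc (onemax x)" using onemax_set_true assms by simp
  have "1 - (1 - ?p * (1 - ?p) ^ (l - 1)) ^ lam =
     1 * measure_pmf.prob (iid_list lam ?C) {cs. \<exists>c\<in>set cs. c \<in> {?y0}}"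
    using prob_iid_exists[of lam ?C "{?y0}"] pm by simp
  also have "\<dots> \<le> measure_pmf.prob (bind_pmf (iid_list lam ?C) best_of)
      (accept x -` {y. onemax x < onemax y})"
  proof (rule prob_bind_ge)
    fix cs assume cs: "cs \<in> set_pmf (iid_list lam ?C)" "cs \<in> {cs. \<exists>c\<in>set cs. c \<in> {?y0}}"
    then have "cs \<noteq> []" "?y0 \<in> set cs" by auto
    have "set_pmf (best_of cs) \<subseteq> accept x -` {y. onemax x < onemax y}"
    proof
      fix y assume "y \<in> set_pmf (best_of cs)"
      then have "onemax ?y0 \<le> onemax y" using set_best_of[OF \<open>cs \<noteq> []\<close>] \<open>?y0 \<in> set cs\<close> by blast
      then show "y \<in> accept x -` {y. onemax x < onemax y}" using om by (simp add: accept_def)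
    qed
    then show "1 \<le> measure_pmf.prob (best_of cs) (accept x -` {y. onemax x < onemax y})"
      by (simp add: prob_support_1)
  qed simp
  also have "\<dots> = measure_pmf.prob (bind_pmf (bind_pmf (iid_list lam ?C) best_of)
       (\<lambda>y. return_pmf (if onemax y \<ge> onemax x then y else x))) {y. onemax x < onemax y}"
    by (simp add: map_pmf_def[symmetric] accept_def[abs_def])
  finally show ?thesis by simp
qed

definition goodm :: "bool list \<Rightarrow> nat \<Rightarrow> bool list set" where
  "goodm x l = {x'. length x' = length x \<and> card {i. i < length x \<and> x!i \<noteq> x'!i} = l \<and>
      (\<exists>j<length x. \<not> x!j \<and> x'!j)}"

lemma mut_phase:
  assumes "length x = n" "1 \<le> n" "l \<le> n" "1 \<le> lam"
  shows "1 - ((1 - real (n - onemax x) / real n) ^ l) ^ lam \<le>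
    measure_pmf.prob (bind_pmf (iid_list lam (flip_exactly l x)) best_of) (goodm x l)"
proof -
  let ?F = "flip_exactly l x"
  have lx: "l \<le> length x" using assms by simp
  have "1 - ((1 - real (n - onemax x) / real n) ^ l) ^ lam \<le>
      1 - (1 - measure_pmf.prob ?F (- bad x)) ^ lam"
  proof -
    have "(1 - measure_pmf.prob ?F (- bad x)) = measure_pmf.prob ?F (bad x)"
      by (simp add: prob_compl')
    also have "\<dots> \<le> (1 - real (n - onemax x) / real n) ^ l"
      using prob_bad_flip_exactly[OF lx assms(1,2)] .
    finally have "(1 - measure_pmf.prob ?F (- bad x)) ^ lam \<le> ((1 - real (n - onemax x) / real n) ^ l) ^ lam"
      by (intro power_mono) (auto simp: prob_compl'[symmetric])
    then show ?thesis by simp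
  qed
  also have "\<dots> = 1 * measure_pmf.prob (iid_list lam ?F) {ms. \<exists>m\<in>set ms. m \<in> - bad x}"
    using prob_iid_exists[of lam ?F "- bad x"] by simp
  also have "\<dots> \<le> measure_pmf.prob (bind_pmf (iid_list lam ?F) best_of) (goodm x l)"
  proof (rule prob_bind_ge)
    fix ms assume ms: "ms \<in> set_pmf (iid_list lam ?F)" "ms \<in> {ms. \<exists>m\<in>set ms. m \<in> - bad x}"
    then obtain m where m: "m \<in> set ms" "m \<notin> bad x" by auto
    have ne: "ms \<noteq> []" using ms assms by (auto simp: set_pmf_iid_list)
    have elems: "\<And>z. z \<in> set ms \<Longrightarrow> z \<in> set_pmf ?F" using ms by (auto simp: set_pmf_iid_list)
    have "set_pmf (best_of ms) \<subseteq> goodm x l"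
    proof
      fix x' assume x': "x' \<in> set_pmf (best_of ms)"
      have "x' \<in> set ms" using set_best_of[OF ne x'] by blast
      then have x'F: "x' \<in> set_pmf ?F" by (rule elems)
      have mF: "m \<in> set_pmf ?F" using m elems by blast
      have le: "onemax m \<le> onemax x'" using set_best_of[OF ne x'] m by blast
      have L1: "length x' = length x" "card {i. i < length x \<and> x!i \<noteq> x'!i} = l"
        using flip_exactly_elem[OF lx x'F] by auto
      have L2: "length m = length x" "card {i. i < length x \<and> x!i \<noteq> m!i} = l"
        using flip_exactly_elem[OF lx mF] by auto
      have u1: "onemax x' + card {i. i < length x \<and> x!i \<and> \<not> x'!i} =
         onemax x + card {i. i < length x \<and> \<not> x!i \<and> x'!i}" using onemax_updown L1 by blast
      have u2: "onemax m + card {i. i < length x \<and> x!i \<and> \<not> m!i} =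
         onemax x + card {i. i < length x \<and> \<not> x!i \<and> m!i}" using onemax_updown L2 by blast
      have d1: "l = card {i. i < length x \<and> x!i \<and> \<not> x'!i} + card {i. i < length x \<and> \<not> x!i \<and> x'!i}"
        using card_diff_updown[of x x'] L1 by simp
      have d2: "l = card {i. i < length x \<and> x!i \<and> \<not> m!i} + card {i. i < length x \<and> \<not> x!i \<and> m!i}"
        using card_diff_updown[of x m] L2 by simp
      have "{i. i < length x \<and> \<not> x!i \<and> m!i} \<noteq> {}" using m(2) by (auto simp: bad_def)
      then have "card {i. i < length x \<and> \<not> x!i \<and> m!i} \<ge> 1"
        by (metis (no_types, lifting) One_nat_def Suc_leI card_gt_0_iff finite_nat_set_iff_bounded
            mem_Collect_eq)
      then have "card {i. i < length x \<and> \<not> x!i \<and> x'!i} \<ge> 1" using u1 u2 d1 d2 le by linarith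
      then have "{i. i < length x \<and> \<not> x!i \<and> x'!i} \<noteq> {}" by (metis card.empty not_one_le_zero)
      then show "x' \<in> goodm x l" using L1 by (auto simp: goodm_def)
    qed
    then show "1 \<le> measure_pmf.prob (best_of ms) (goodm x l)" by (simp add: prob_support_1)
  qed simp
  finally show ?thesis .
qed



lemma one_minus_pow_ge_exp:
  fixes x :: real
  assumes "0 \<le> x" "x \<le> 1/2"
  shows "exp (- (real k * (x + 2 * x\<^sup>2))) \<le> (1 - x) ^ k"
proof -
  have pos: "0 < 1 - x" using assms by simp
  have "(1 - x) ^ k = exp (real k * ln (1 - x))"
    using pos by (simp add: ln_realpow[symmetric])
  moreover have "- (real k * (x + 2 * x\<^sup>2)) \<le> real k * ln (1 - x)"
  proof -
    have "real k * (- x - 2 * x\<^sup>2) \<le> real k * ln (1 - x)"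
      using ln_one_minus_pos_lower_bound[OF assms] by (intro mult_left_mono) auto
    then show ?thesis by (simp add: algebra_simps)
  qed
  ultimately show ?thesis by simp
qed

definition cX :: real where "cX = 1 - exp (- exp (-4))"

lemma cX_pos: "0 < cX"
  unfolding cX_def by simp

lemma cX_le1: "cX \<le> 1"
  unfolding cX_def by simp

lemma cross_bound:
  assumes "8 \<le> lam" "1 \<le> l" "l \<le> 3 * lam"
  shows "cX \<le> 1 - (1 - (1 / real lam) * (1 - 1 / real lam) ^ (l - 1)) ^ lam"
proof -
  let ?x = "1 / real lam"
  have x: "0 \<le> ?x" "?x \<le> 1/2" using assms by auto
  have "exp (-4) \<le> exp (- (real (3 * lam) * (?x + 2 * ?x\<^sup>2)))"
  proof -
    have "real (3 * lam) * (?x + 2 * ?x\<^sup>2) = 3 + 6 / real lam"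
      using assms by (simp add: power2_eq_square field_simps)
    also have "\<dots> \<le> 4" using assms by (simp add: field_simps)
    finally show ?thesis by simp
  qed
  also have "\<dots> \<le> (1 - ?x) ^ (3 * lam)" by (rule one_minus_pow_ge_exp[OF x])
  also have "\<dots> \<le> (1 - ?x) ^ (l - 1)"
    using assms x by (intro power_decreasing) auto
  finally have e4: "exp (-4) \<le> (1 - ?x) ^ (l - 1)" .
  let ?a = "?x * (1 - ?x) ^ (l - 1)"
  have a0: "0 \<le> ?a" using x by simp
  have a1: "?a \<le> 1" using x by (intro mult_le_one) (auto intro: power_le_one)
  have "(1 - ?a) ^ lam \<le> exp (- (?a * real lam))" by (rule one_minus_pow_le_exp[OF a0 a1])
  also have "\<dots> \<le> exp (- exp (-4))"
  proof -
    have "?a * real lam = (1 - ?x) ^ (l - 1)" using assms by simp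
    then show ?thesis using e4 by simp
  qed
  finally show ?thesis unfolding cX_def by simp
qed

definition qGA :: "nat \<Rightarrow> nat \<Rightarrow> nat \<Rightarrow> real" where
  "qGA n lam d = (1/2) * cX * (1 - exp (- (real d * real lam * real lam / (8 * real n))))"

lemma ga_improve:
  assumes "length x = n" "onemax x < n" "8 \<le> lam" "lam \<le> n"
  shows "qGA n lam (n - onemax x) \<le> measure_pmf.prob (ga_iter n lam x) {y. onemax x < onemax y}"
proof -
  let ?d = "real (n - onemax x)"
  let ?E = "1 - exp (- (?d * real lam * real lam / (8 * real n)))"
  let ?B = "binomial_pmf n (real lam / real n)"
  have n1: "1 \<le> n" using assms by simp
  have E0: "0 \<le> ?E" using assms by simp
  have "qGA n lam (n - onemax x) = (cX * ?E) * (1/2)" by (simp add: qGA_def)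
  also have "\<dots> \<le> (cX * ?E) * measure_pmf.prob ?B (Lset lam)"
    using binomial_Lset[OF assms(3,4)] cX_pos E0 by (intro mult_left_mono) auto
  also have "\<dots> \<le> measure_pmf.prob (ga_iter n lam x) {y. onemax x < onemax y}"
    unfolding ga_iter_def
  proof (rule prob_bind_ge)
    fix l assume l: "l \<in> set_pmf ?B" "l \<in> Lset lam"
    have "l \<le> n" using l(1) assms by (auto simp: set_pmf_binomial_eq split: if_splits)
    have l1: "1 \<le> l" "l \<le> 3 * lam" "lam \<le> 8 * l" using l(2) assms by (auto simp: Lset_def)
    have "?E \<le> 1 - ((1 - ?d / real n) ^ l) ^ lam"
    proof -
      have dn: "0 \<le> ?d / real n" "?d / real n \<le> 1" using assms by auto
      have "((1 - ?d / real n) ^ l) ^ lam = (1 - ?d / real n) ^ (l * lam)"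
        by (simp add: power_mult)
      also have "\<dots> \<le> exp (- (?d / real n * real (l * lam)))"
        by (rule one_minus_pow_le_exp[OF dn])
      also have "\<dots> \<le> exp (- (?d * real lam * real lam / (8 * real n)))"
      proof -
        have "real lam * real lam \<le> 8 * real l * real lam"
          using l1 by (intro mult_right_mono) auto
        then have "?d * (real lam * real lam) \<le> ?d * (8 * real l * real lam)"
          by (intro mult_left_mono) auto
        then have "?d * real lam * real lam / (8 * real n) \<le> ?d / real n * real (l * lam)"
          using n1 by (simp add: field_simps)
        then show ?thesis by simp
      qed
      finally show ?thesis by simp
    qed
    also have "\<dots> \<le> measure_pmf.prob (bind_pmf (iid_list lam (flip_exactly l x)) best_of) (goodm x l)"
      using mut_phase[OF assms(1) n1 \<open>l \<le> n\<close>] assms by simp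
    finally have m: "?E \<le> measure_pmf.prob (bind_pmf (iid_list lam (flip_exactly l x)) best_of) (goodm x l)" .
    have "cX * ?E \<le> cX * measure_pmf.prob (bind_pmf (iid_list lam (flip_exactly l x)) best_of) (goodm x l)"
      using m cX_pos by (intro mult_left_mono) auto
    also have "\<dots> \<le> measure_pmf.prob (bind_pmf (bind_pmf (iid_list lam (flip_exactly l x)) best_of)
          (\<lambda>x'. bind_pmf (bind_pmf (iid_list lam (crossover (1 / real lam) x x')) best_of)
             (\<lambda>y. return_pmf (if onemax x \<le> onemax y then y else x)))) {y. onemax x < onemax y}"
    proof (rule prob_bind_ge)
      fix x' assume x': "x' \<in> goodm x l"
      then obtain j where j: "j < n" "\<not> x!j" "x'!j" "length x' = n"
        "card {i. i < length x \<and> x!i \<noteq> x'!i} = l"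
        using assms by (auto simp: goodm_def)
      have "cX \<le> 1 - (1 - (1 / real lam) * (1 - 1 / real lam) ^ (l - 1)) ^ lam"
        using cross_bound assms l1 by simp
      also have "\<dots> \<le> measure_pmf.prob (bind_pmf (bind_pmf (iid_list lam (crossover (1 / real lam) x x')) best_of)
             (\<lambda>y. return_pmf (if onemax x \<le> onemax y then y else x))) {y. onemax x < onemax y}"
        using cross_phase[OF assms(1) j(4) j(1) j(2) j(3) j(5)] assms by simp
      finally show "cX \<le> \<dots>" .
    qed (use cX_pos in simp)
    finally show "cX * ?E \<le> measure_pmf.prob (bind_pmf (bind_pmf (iid_list lam (flip_exactly l x)) best_of)
          (\<lambda>x'. bind_pmf (bind_pmf (iid_list lam (crossover (1 / real lam) x x')) best_of)
             (\<lambda>y. return_pmf (if onemax x \<le> onemax y then y else x)))) {y. onemax x < onemax y}" .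
  qed (use cX_pos E0 in simp)
  finally show ?thesis .
qed

definition pEA :: "nat \<Rightarrow> nat \<Rightarrow> real" where
  "pEA n d = real d * exp (-2) / real n"

lemma ea_improve2:
  assumes "length x = n" "2 \<le> n"
  shows "pEA n (n - onemax x) \<le> measure_pmf.prob (ea_iter n x) {y. onemax x < onemax y}"
proof -
  let ?x = "1 / real n"
  have x: "0 \<le> ?x" "?x \<le> 1/2" using assms by auto
  have "exp (-2) \<le> exp (- (real (n - 1) * (?x + 2 * ?x\<^sup>2)))"
  proof -
    have "real (n - 1) * (?x + 2 * ?x\<^sup>2) \<le> real n * (?x + 2 * ?x\<^sup>2)"
      by (intro mult_right_mono) auto
    also have "\<dots> = 1 + 2 / real n" using assms by (simp add: power2_eq_square field_simps)
    also have "\<dots> \<le> 2" using assms by (simp add: field_simps)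
    finally show ?thesis by simp
  qed
  also have "\<dots> \<le> (1 - ?x) ^ (n - 1)" by (rule one_minus_pow_ge_exp[OF x])
  finally have e: "exp (-2) \<le> (1 - ?x) ^ (n - 1)" .
  have "pEA n (n - onemax x) = real (n - onemax x) * (?x * exp (-2))"
    by (simp add: pEA_def)
  also have "\<dots> \<le> real (n - onemax x) * (?x * (1 - ?x) ^ (n - 1))"
    using e by (intro mult_left_mono) auto
  also have "\<dots> \<le> measure_pmf.prob (ea_iter n x) {y. onemax x < onemax y}"
    using ea_improve[OF assms(1)] assms by simp
  finally show ?thesis .
qed



lemma potential_sum:
  fixes step :: "'s \<Rightarrow> 's pmf" and D :: "nat \<Rightarrow> 's pmf"
  assumes D: "\<And>t. D (Suc t) = bind_pmf (D t) step"
    and I0: "set_pmf (D 0) \<subseteq> I" and Istep: "\<And>s. s \<in> I \<Longrightarrow> set_pmf (step s) \<subseteq> I"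
    and drift: "\<And>s. s \<in> I \<Longrightarrow> f s + (\<integral>\<^sup>+y. g y \<partial>step s) \<le> g s"
  shows "(\<Sum>t. \<integral>\<^sup>+s. f s \<partial>D t) \<le> (\<integral>\<^sup>+s. g s \<partial>D 0)"
proof -
  have inv: "set_pmf (D t) \<subseteq> I" for t
  proof (induction t)
    case 0 then show ?case using I0 .
  next
    case (Suc t) then show ?case using Istep by (auto simp: D)
  qed
  have main: "(\<Sum>t<T. \<integral>\<^sup>+s. f s \<partial>D t) + (\<integral>\<^sup>+s. g s \<partial>D T) \<le> (\<integral>\<^sup>+s. g s \<partial>D 0)" for T
  proof (induction T)
    case 0 then show ?case by simp
  next
    case (Suc T)
    have "(\<integral>\<^sup>+s. f s \<partial>D T) + (\<integral>\<^sup>+s. g s \<partial>D (Suc T)) =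
        (\<integral>\<^sup>+s. f s + (\<integral>\<^sup>+y. g y \<partial>step s) \<partial>D T)"
      by (simp add: D nn_integral_add)
    also have "\<dots> \<le> (\<integral>\<^sup>+s. g s \<partial>D T)"
      using inv drift by (intro nn_integral_mono_AE) (auto simp: AE_measure_pmf_iff)
    finally have "(\<integral>\<^sup>+s. f s \<partial>D T) + (\<integral>\<^sup>+s. g s \<partial>D (Suc T)) \<le> (\<integral>\<^sup>+s. g s \<partial>D T)" .
    then have "(\<Sum>t<Suc T. \<integral>\<^sup>+s. f s \<partial>D t) + (\<integral>\<^sup>+s. g s \<partial>D (Suc T)) \<le>
        (\<Sum>t<T. \<integral>\<^sup>+s. f s \<partial>D t) + (\<integral>\<^sup>+s. g s \<partial>D T)"
      by (simp add: add.assoc add_left_mono)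
    then show ?case using Suc by order
  qed
  show ?thesis
  proof (rule suminf_le_const)
    show "summable (\<lambda>t. \<integral>\<^sup>+s. f s \<partial>D t)" by simp
    fix T
    show "(\<Sum>t<T. \<integral>\<^sup>+s. f s \<partial>D t) \<le> (\<integral>\<^sup>+s. g s \<partial>D 0)"
      using main[of T] by (meson add_increasing2 order_trans zero_le le_add1 order.refl
          add_left_mono dual_order.trans)
  qed
qed



definition hval :: "nat \<Rightarrow> nat \<Rightarrow> nat \<Rightarrow> nat \<Rightarrow> real" where
  "hval n lam d c = min (real (lam - c)) (1 / pEA n d) +
     (1 - pEA n d) ^ (lam - c) * (2 * real lam / qGA n lam d)"

definition Ssum :: "nat \<Rightarrow> nat \<Rightarrow> nat \<Rightarrow> real" where
  "Ssum n lam d = (\<Sum>j\<in>{1..<d}. hval n lam j 0)"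

definition gpot :: "nat \<Rightarrow> nat \<Rightarrow> bool list \<times> nat \<Rightarrow> ennreal" where
  "gpot n lam s = (if onemax (fst s) < n then
     ennreal (hval n lam (n - onemax (fst s)) (snd s) + Ssum n lam (n - onemax (fst s))) else 0)"

lemma pEA_pos: "1 \<le> d \<Longrightarrow> 1 \<le> n \<Longrightarrow> 0 < pEA n d"
  by (simp add: pEA_def)

lemma pEA_le1: "d \<le> n \<Longrightarrow> pEA n d \<le> 1"
proof -
  assume "d \<le> n"
  have "exp (-2::real) \<le> 1" by simp
  then have "real d * exp (-2) \<le> real n * 1"
    using \<open>d \<le> n\<close> by (intro mult_mono) auto
  then show "pEA n d \<le> 1" by (cases "n = 0") (auto simp: pEA_def field_simps)
qed

lemma qGA_pos: "1 \<le> d \<Longrightarrow> 1 \<le> n \<Longrightarrow> 1 \<le> lam \<Longrightarrow> 0 < qGA n lam d"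
  using cX_pos by (simp add: qGA_def)

lemma hval_nonneg:
  assumes "1 \<le> d" "d \<le> n" "1 \<le> lam"
  shows "0 \<le> hval n lam d c"
proof -
  have "0 < pEA n d" "pEA n d \<le> 1" "0 < qGA n lam d"
    using assms pEA_pos pEA_le1 qGA_pos by auto
  then show ?thesis by (simp add: hval_def)
qed

lemma Ssum_mono:
  assumes "1 \<le> d'" "d' < d" "d \<le> Suc n" "1 \<le> lam"
  shows "hval n lam d' 0 + Ssum n lam d' \<le> Ssum n lam d"
proof -
  have "hval n lam d' 0 + Ssum n lam d' = (\<Sum>j\<in>{1..<Suc d'}. hval n lam j 0)"
    using assms by (simp add: Ssum_def)
  also have "\<dots> \<le> Ssum n lam d"
    unfolding Ssum_def using assms
    by (intro sum_mono2) (auto intro: hval_nonneg)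
  finally show ?thesis .
qed

lemma hval_ea:
  assumes "c < lam" "1 \<le> d" "d \<le> n" "1 \<le> lam"
  shows "1 + (1 - pEA n d) * hval n lam d (Suc c) \<le> hval n lam d c"
proof -
  let ?p = "pEA n d" and ?G = "2 * real lam / qGA n lam d"
  let ?L = "real (lam - c)"
  have p: "0 < ?p" "?p \<le> 1" using assms pEA_pos pEA_le1 by auto
  have L: "real (lam - Suc c) = ?L - 1" "?L \<ge> 1" using assms by auto
  have pw: "(1 - ?p) * (1 - ?p) ^ (lam - Suc c) = (1 - ?p) ^ (lam - c)"
    using assms by (simp add: Suc_diff_Suc power_Suc[symmetric])
  have key: "1 + (1 - ?p) * min (?L - 1) (1 / ?p) \<le> min ?L (1 / ?p)"
  proof (cases "?L \<le> 1 / ?p")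
    case True
    have "(1 - ?p) * min (?L - 1) (1 / ?p) \<le> 1 * (?L - 1)"
      using p L by (intro mult_mono) auto
    then show ?thesis using True by simp
  next
    case False
    have "(1 - ?p) * min (?L - 1) (1 / ?p) \<le> (1 - ?p) * (1 / ?p)"
      using p by (intro mult_left_mono) auto
    also have "\<dots> = 1 / ?p - 1" using p by (simp add: field_simps)
    finally show ?thesis using False by simp
  qed
  have "1 + (1 - ?p) * hval n lam d (Suc c) =
      1 + (1 - ?p) * min (?L - 1) (1 / ?p) + ((1 - ?p) * (1 - ?p) ^ (lam - Suc c)) * ?G"
  proof -
    have h: "hval n lam d (Suc c) = min (?L - 1) (1 / ?p) + (1 - ?p) ^ (lam - Suc c) * ?G"
      unfolding hval_def L(1) ..
    have r: "\<And>a b c g::real. 1 + a * (b + c * g) = 1 + a * b + (a * c) * g"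
      by (simp add: algebra_simps)
    show ?thesis unfolding h by (rule r)
  qed
  also have "\<dots> \<le> min ?L (1 / ?p) + (1 - ?p) ^ (lam - c) * ?G"
    using key pw by simp
  also have "\<dots> = hval n lam d c" by (simp add: hval_def)
  finally show ?thesis .
qed

lemma hval_ga:
  assumes "1 \<le> d" "d \<le> n" "1 \<le> lam"
  shows "2 * real lam + (1 - qGA n lam d) * hval n lam d lam \<le> hval n lam d lam"
proof -
  have "0 < pEA n d" "0 < qGA n lam d" using assms pEA_pos qGA_pos by auto
  then show ?thesis by (simp add: hval_def field_simps)
qed



lemma drift_core:
  assumes par: "1 \<le> n" "1 \<le> lam"
    and x: "length x = n" "onemax x < n"
    and M: "\<And>y. y \<in> set_pmf M \<Longrightarrow> length y = n \<and> onemax x \<le> onemax y"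
    and r: "r \<le> measure_pmf.prob M {y. onemax x < onemax y}"
  shows "(\<integral>\<^sup>+y. gpot n lam (y, if onemax x < onemax y then 0 else c') \<partial>M) \<le>
     ennreal (Ssum n lam (n - onemax x) + (1 - r) * hval n lam (n - onemax x) c')"
proof -
  let ?d = "n - onemax x"
  let ?A = "{y. \<not> onemax x < onemax y}"
  let ?S = "Ssum n lam ?d" and ?h = "hval n lam ?d c'"
  have d: "1 \<le> ?d" "?d \<le> n" using x by auto
  have h0: "0 \<le> ?h" using hval_nonneg d par by auto
  have S0: "0 \<le> ?S" unfolding Ssum_def using par x by (intro sum_nonneg hval_nonneg) auto
  have pw: "gpot n lam (y, if onemax x < onemax y then 0 else c') \<le> ennreal ?S + ennreal ?h * indicator ?A y"
    if y: "y \<in> set_pmf M" for y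
  proof (cases "onemax x < onemax y")
    case True
    show ?thesis
    proof (cases "onemax y < n")
      case True2: True
      have "hval n lam (n - onemax y) 0 + Ssum n lam (n - onemax y) \<le> ?S"
        using True True2 par x by (intro Ssum_mono) auto
      then have "ennreal (hval n lam (n - onemax y) 0 + Ssum n lam (n - onemax y)) \<le> ennreal ?S"
        by (rule ennreal_leI)
      then show ?thesis using True True2 by (simp add: gpot_def)
    next
      case False
      then show ?thesis using True by (simp add: gpot_def)
    qed
  next
    case False
    then have "onemax y = onemax x" using M[OF y] by simp
    then show ?thesis using False x h0 S0 by (simp add: gpot_def ennreal_plus)
  qed
  have "(\<integral>\<^sup>+y. gpot n lam (y, if onemax x < onemax y then 0 else c') \<partial>M) \<le>
      (\<integral>\<^sup>+y. ennreal ?S + ennreal ?h * indicator ?A y \<partial>M)"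
    using pw by (intro nn_integral_mono_AE) (auto simp: AE_measure_pmf_iff)
  also have "\<dots> = ennreal ?S + ennreal ?h * emeasure M ?A"
    by (simp add: nn_integral_add nn_integral_cmult_indicator)
  also have "emeasure M ?A = ennreal (1 - measure_pmf.prob M {y. onemax x < onemax y})"
    using prob_compl'[of M "{y. onemax x < onemax y}"]
    by (simp add: measure_pmf.emeasure_eq_measure Compl_eq)
  also have "ennreal ?S + ennreal ?h * ennreal (1 - measure_pmf.prob M {y. onemax x < onemax y}) =
      ennreal (?S + ?h * (1 - measure_pmf.prob M {y. onemax x < onemax y}))"
    using h0 S0 by (simp add: ennreal_mult ennreal_plus)
  also have "\<dots> \<le> ennreal (?S + (1 - r) * ?h)"
  proof (intro ennreal_leI)
    have "?h * (1 - measure_pmf.prob M {y. onemax x < onemax y}) \<le> ?h * (1 - r)"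
      using r h0 by (intro mult_left_mono) auto
    then show "?S + ?h * (1 - measure_pmf.prob M {y. onemax x < onemax y}) \<le> ?S + (1 - r) * ?h"
      by (simp add: mult.commute)
  qed
  finally show ?thesis .
qed

lemma qGA_le1: "qGA n lam d \<le> 1"
proof -
  have "0 \<le> 1 - exp (- (real d * real lam * real lam / (8 * real n)))"
    by (simp add: zero_le_divide_iff)
  moreover have "1 - exp (- (real d * real lam * real lam / (8 * real n))) \<le> 1" by simp
  ultimately have "cX * (1 - exp (- (real d * real lam * real lam / (8 * real n)))) \<le> 1"
    using cX_pos cX_le1 by (intro mult_le_one) auto
  then show ?thesis by (simp add: qGA_def)
qed

definition hcost :: "nat \<Rightarrow> nat \<Rightarrow> bool list \<times> nat \<Rightarrow> ennreal" where
  "hcost n lam s = (if onemax (fst s) = n then 0 else ennreal (real (hh_cost lam s)))"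

lemma drift:
  assumes par: "2 \<le> n" "8 \<le> lam" "lam \<le> n"
    and s: "length x = n" "c \<le> lam"
  shows "hcost n lam (x, c) + (\<integral>\<^sup>+y. gpot n lam y \<partial>hh_step n lam (x, c)) \<le> gpot n lam (x, c)"
proof (cases "onemax x < n")
  case False
  then have eq: "onemax x = n" using onemax_le_length[of x] s by simp
  have "(\<integral>\<^sup>+y. gpot n lam y \<partial>hh_step n lam (x, c)) = (\<integral>\<^sup>+y. 0 \<partial>hh_step n lam (x, c))"
  proof (intro nn_integral_cong_AE)
    have "gpot n lam y = 0" if y: "y \<in> set_pmf (hh_step n lam (x, c))" for y
    proof -
      obtain z where z: "z \<in> set_pmf (if c < lam then ea_iter n x else ga_iter n lam x)" "fst y = z"
        using y by (auto simp: hh_step_def)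
      have "onemax x \<le> onemax z"
        using z set_ea_iter set_ga_iter[of z n lam x] par s by (auto split: if_splits)
      then show ?thesis using eq z by (simp add: gpot_def)
    qed
    then show "AE y in measure_pmf (hh_step n lam (x, c)). gpot n lam y = 0"
      by (simp add: AE_measure_pmf_iff)
  qed
  then show ?thesis using eq by (simp add: hcost_def gpot_def)
next
  case True
  let ?d = "n - onemax x"
  have d: "1 \<le> ?d" "?d \<le> n" using True s by auto
  have S0: "0 \<le> Ssum n lam ?d" unfolding Ssum_def using par True
    by (intro sum_nonneg hval_nonneg) auto
  show ?thesis
  proof (cases "c < lam")
    case True2: True
    have "(\<integral>\<^sup>+y. gpot n lam y \<partial>hh_step n lam (x, c)) =
        (\<integral>\<^sup>+y. gpot n lam (y, if onemax x < onemax y then 0 else Suc c) \<partial>ea_iter n x)"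
    proof -
      have m: "min lam (Suc c) = Suc c" using True2 by simp
      have "hh_step n lam (x, c) = map_pmf (\<lambda>y. (y, if onemax x < onemax y then 0 else Suc c)) (ea_iter n x)"
        unfolding hh_step_def prod.case m using True2 by simp
      then show ?thesis by simp
    qed
    also have "\<dots> \<le> ennreal (Ssum n lam ?d + (1 - pEA n ?d) * hval n lam ?d (Suc c))"
      using par s True
      by (intro drift_core ea_improve2) (auto dest: set_ea_iter)
    finally have I: "(\<integral>\<^sup>+y. gpot n lam y \<partial>hh_step n lam (x, c)) \<le> \<dots>" .
    have "hcost n lam (x, c) + (\<integral>\<^sup>+y. gpot n lam y \<partial>hh_step n lam (x, c)) \<le>
        ennreal 1 + ennreal (Ssum n lam ?d + (1 - pEA n ?d) * hval n lam ?d (Suc c))"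
      using True True2 I by (auto simp: hcost_def hh_cost_def intro: add_left_mono)
    also have "\<dots> = ennreal (1 + Ssum n lam ?d + (1 - pEA n ?d) * hval n lam ?d (Suc c))"
    proof -
      have "0 \<le> (1 - pEA n ?d) * hval n lam ?d (Suc c)"
        using pEA_le1 d par by (intro mult_nonneg_nonneg hval_nonneg) auto
      then have "ennreal (1 + (Ssum n lam ?d + (1 - pEA n ?d) * hval n lam ?d (Suc c))) =
          ennreal 1 + ennreal (Ssum n lam ?d + (1 - pEA n ?d) * hval n lam ?d (Suc c))"
        using S0 by (intro ennreal_plus) auto
      then show ?thesis by (metis add.assoc)
    qed
    also have "\<dots> \<le> ennreal (hval n lam ?d c + Ssum n lam ?d)"
    proof (rule ennreal_leI)
      have "1 \<le> lam" using par by simp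
      then have "1 + (1 - pEA n ?d) * hval n lam ?d (Suc c) \<le> hval n lam ?d c"
        using hval_ea[OF True2 d] by blast
      then show "1 + Ssum n lam ?d + (1 - pEA n ?d) * hval n lam ?d (Suc c) \<le> hval n lam ?d c + Ssum n lam ?d"
        by linarith
    qed
    also have "\<dots> = gpot n lam (x, c)" using True by (simp add: gpot_def)
    finally show ?thesis .
  next
    case False
    then have c: "c = lam" using s by simp
    have "(\<integral>\<^sup>+y. gpot n lam y \<partial>hh_step n lam (x, c)) =
        (\<integral>\<^sup>+y. gpot n lam (y, if onemax x < onemax y then 0 else lam) \<partial>ga_iter n lam x)"
    proof -
      have m: "min lam (Suc lam) = lam" by simp
      have "hh_step n lam (x, c) = map_pmf (\<lambda>y. (y, if onemax x < onemax y then 0 else lam)) (ga_iter n lam x)"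
        unfolding hh_step_def prod.case c m by simp
      then show ?thesis by simp
    qed
    also have "\<dots> \<le> ennreal (Ssum n lam ?d + (1 - qGA n lam ?d) * hval n lam ?d lam)"
      using par s True
      by (intro drift_core ga_improve) (auto dest: set_ga_iter)
    finally have I: "(\<integral>\<^sup>+y. gpot n lam y \<partial>hh_step n lam (x, c)) \<le> \<dots>" .
    have "hcost n lam (x, c) + (\<integral>\<^sup>+y. gpot n lam y \<partial>hh_step n lam (x, c)) \<le>
        ennreal (2 * real lam) + ennreal (Ssum n lam ?d + (1 - qGA n lam ?d) * hval n lam ?d lam)"
      using True c I by (auto simp: hcost_def hh_cost_def intro: add_left_mono)
    also have "\<dots> = ennreal (2 * real lam + Ssum n lam ?d + (1 - qGA n lam ?d) * hval n lam ?d lam)"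
    proof -
      have "0 \<le> hval n lam ?d lam" using d par by (intro hval_nonneg) auto
      have "qGA n lam ?d \<le> 1" by (rule qGA_le1)
      then have "0 \<le> (1 - qGA n lam ?d) * hval n lam ?d lam"
        using \<open>0 \<le> hval n lam ?d lam\<close> by simp
      then have "ennreal (2 * real lam + (Ssum n lam ?d + (1 - qGA n lam ?d) * hval n lam ?d lam)) =
          ennreal (2 * real lam) + ennreal (Ssum n lam ?d + (1 - qGA n lam ?d) * hval n lam ?d lam)"
        using S0 by (intro ennreal_plus) auto
      then show ?thesis by (metis add.assoc)
    qed
    also have "\<dots> \<le> ennreal (hval n lam ?d c + Ssum n lam ?d)"
    proof (rule ennreal_leI)
      have "1 \<le> lam" using par by simp
      then have "2 * real lam + (1 - qGA n lam ?d) * hval n lam ?d lam \<le> hval n lam ?d lam"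
        using hval_ga[OF d] by blast
      then show "2 * real lam + Ssum n lam ?d + (1 - qGA n lam ?d) * hval n lam ?d lam \<le> hval n lam ?d c + Ssum n lam ?d"
        unfolding c by linarith
    qed
    also have "\<dots> = gpot n lam (x, c)" using True by (simp add: gpot_def)
    finally show ?thesis .
  qed
qed



lemma hh_runtime_bound:
  assumes par: "2 \<le> n" "8 \<le> lam" "lam \<le> n"
  shows "hh_runtime n lam \<le> ennreal (Ssum n lam (Suc n))"
proof -
  let ?I = "{s. length (fst s) = n \<and> snd s \<le> lam}"
  let ?U = "{xs::bool list. length xs = n}"
  have finU: "finite ?U"
    using finite_lists_length_eq[of "UNIV :: bool set" n] by simp
  have neU: "?U \<noteq> {}" by (metis (mono_tags, lifting) empty_iff length_replicate mem_Collect_eq)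
  have D0: "set_pmf (hh_dist n lam 0) = (\<lambda>x. (x, 0)) ` ?U"
    unfolding hh_dist_def using finU neU by simp
  have "hh_runtime n lam = (\<Sum>t. \<integral>\<^sup>+s. hcost n lam s \<partial>hh_dist n lam t)"
    unfolding hh_runtime_def hcost_def ..
  also have "\<dots> \<le> (\<integral>\<^sup>+s. gpot n lam s \<partial>hh_dist n lam 0)"
  proof (rule potential_sum[where I = ?I])
    show "hh_dist n lam (Suc t) = bind_pmf (hh_dist n lam t) (hh_step n lam)" for t
      by (simp add: hh_dist_def)
    show "set_pmf (hh_dist n lam 0) \<subseteq> ?I" using D0 par by auto
    show "set_pmf (hh_step n lam s) \<subseteq> ?I" if s: "s \<in> ?I" for s
    proof
      fix y assume y: "y \<in> set_pmf (hh_step n lam s)"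
      obtain x c where xc: "s = (x, c)" by (cases s)
      obtain z where z: "z \<in> set_pmf (if c < lam then ea_iter n x else ga_iter n lam x)"
        "y = (z, if onemax x < onemax z then 0 else min lam (Suc c))"
        using y unfolding xc hh_step_def by auto
      have "length z = length x"
        using z(1) set_ea_iter set_ga_iter[of z n lam x] par s xc by (auto split: if_splits)
      then show "y \<in> ?I" using z s xc by auto
    qed
    show "hcost n lam s + (\<integral>\<^sup>+y. gpot n lam y \<partial>hh_step n lam s) \<le> gpot n lam s"
      if s: "s \<in> ?I" for s
    proof -
      obtain x c where xc: "s = (x, c)" by (cases s)
      show ?thesis unfolding xc by (rule drift) (use par s xc in auto)
    qed
  qed
  also have "\<dots> \<le> (\<integral>\<^sup>+s. ennreal (Ssum n lam (Suc n)) \<partial>hh_dist n lam 0)"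
  proof (intro nn_integral_mono_AE)
    have "gpot n lam s \<le> ennreal (Ssum n lam (Suc n))" if s: "s \<in> set_pmf (hh_dist n lam 0)" for s
    proof -
      obtain x where x: "s = (x, 0)" "length x = n" using s D0 by auto
      show ?thesis
      proof (cases "onemax x < n")
        case True
        have "hval n lam (n - onemax x) 0 + Ssum n lam (n - onemax x) \<le> Ssum n lam (Suc n)"
          using True par by (intro Ssum_mono) auto
        then show ?thesis using True x by (simp add: gpot_def ennreal_leI)
      next
        case False
        then show ?thesis using x by (simp add: gpot_def)
      qed
    qed
    then show "AE s in measure_pmf (hh_dist n lam 0). gpot n lam s \<le> ennreal (Ssum n lam (Suc n))"
      by (simp add: AE_measure_pmf_iff)
  qed
  also have "\<dots> = ennreal (Ssum n lam (Suc n))"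
    by (simp add: measure_pmf.emeasure_space_1)
  finally show ?thesis .
qed



lemma harm_shift:
  fixes b :: real
  assumes "0 < b"
  shows "(\<Sum>d\<in>{1..n}. 1 / (real d + b)) \<le> ln (real n + b) - ln b"
proof (induction n)
  case 0
  then show ?case by simp
next
  case (Suc n)
  let ?y = "real (Suc n) + b"
  have y: "0 < ?y - 1" "0 < ?y" using assms by auto
  have "ln ((?y - 1) / ?y) \<le> (?y - 1) / ?y - 1" using y by (intro ln_le_minus_one) auto
  then have "ln (?y - 1) - ln ?y \<le> - 1 / ?y" using y by (simp add: ln_div field_simps)
  then have step: "1 / ?y \<le> ln ?y - ln (real n + b)" by (simp add: algebra_simps)
  have "(\<Sum>d\<in>{1..Suc n}. 1 / (real d + b)) = (\<Sum>d\<in>{1..n}. 1 / (real d + b)) + 1 / ?y"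
    by simp
  also have "\<dots> \<le> ln (real n + b) - ln b + (ln ?y - ln (real n + b))"
    using Suc step by linarith
  finally show ?case by simp
qed

lemma exp_sum:
  fixes t :: real
  assumes "0 < t"
  shows "(\<Sum>d\<in>{1..n}. exp (- (t * real d))) \<le> 1 / t"
proof -
  have "(\<Sum>d\<in>{1..n}. exp (- (t * real d))) \<le> (1 - exp (- (t * real n))) / t" for n
  proof (induction n)
    case 0
    then show ?case by simp
  next
    case (Suc n)
    have "(1 + t) * exp (- (t * real (Suc n))) \<le> exp t * exp (- (t * real (Suc n)))"
      by (intro mult_right_mono) (auto simp: add.commute)
    also have "\<dots> = exp (- (t * real n))" by (simp add: exp_add[symmetric] algebra_simps)
    finally have "t * exp (- (t * real (Suc n))) \<le> exp (- (t * real n)) - exp (- (t * real (Suc n)))"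
      by (simp add: algebra_simps)
    then have step: "exp (- (t * real (Suc n))) \<le> (exp (- (t * real n)) - exp (- (t * real (Suc n)))) / t"
      using assms by (simp add: field_simps)
    have "(\<Sum>d\<in>{1..Suc n}. exp (- (t * real d))) = (\<Sum>d\<in>{1..n}. exp (- (t * real d))) + exp (- (t * real (Suc n)))"
      by simp
    also have "\<dots> \<le> (1 - exp (- (t * real n))) / t + (exp (- (t * real n)) - exp (- (t * real (Suc n)))) / t"
      using Suc step by linarith
    also have "\<dots> = (1 - exp (- (t * real (Suc n)))) / t" by (subst add_divide_distrib[symmetric]) simp
    finally show ?case .
  qed
  also have "(1 - exp (- (t * real n))) / t \<le> 1 / t" for n
    using assms by (intro divide_right_mono) auto
  finally show ?thesis .
qed

lemma min_bound:
  fixes a l d :: real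
  assumes "0 < a" "0 < l" "0 < d"
  shows "min l (a / d) \<le> 2 * a / (d + a / l)"
proof (cases "d \<le> a / l")
  have pos: "0 < d + a / l" using assms by (simp add: add_pos_pos)
  case True
  have "d + a / l \<le> 2 * a / l" using True by simp
  then have "2 * a / (2 * a / l) \<le> 2 * a / (d + a / l)"
    using assms pos by (intro divide_left_mono) auto
  then have "l \<le> 2 * a / (d + a / l)" using assms by simp
  then show ?thesis by simp
next
  case False
  have pos: "0 < d + a / l" using assms by (simp add: add_pos_pos)
  have "d + a / l \<le> 2 * d" using False by simp
  then have "2 * a / (2 * d) \<le> 2 * a / (d + a / l)"
    using assms pos by (intro divide_left_mono) auto
  then have "a / d \<le> 2 * a / (d + a / l)" using assms by simp
  then show ?thesis by simp
qed

lemma inv_one_minus_exp: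
  fixes y :: real
  assumes "0 < y"
  shows "1 / (1 - exp (- y)) \<le> 1 + 1 / y"
proof -
  have "1 + y \<le> exp y" by (simp add: add.commute)
  then have e: "exp (- y) \<le> 1 / (1 + y)" using assms by (simp add: exp_minus field_simps)
  then have "y / (1 + y) \<le> 1 - exp (- y)" using assms by (simp add: field_simps)
  moreover have "0 < y / (1 + y)" using assms by simp
  moreover have "0 < 1 - exp (- y)" using assms by simp
  ultimately have "1 / (1 - exp (- y)) \<le> 1 / (y / (1 + y))"
    by (intro divide_left_mono mult_pos_pos) auto
  also have "\<dots> = 1 + 1 / y" using assms by (simp add: field_simps)
  finally show ?thesis .
qed



lemma hval_bound:
  assumes "1 \<le> d" "d \<le> n" "1 \<le> lam"
  shows "hval n lam d 0 \<le> 2 * (real n * exp 2) / (real d + real n * exp 2 / real lam)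
     + (4 * real lam / cX) * exp (- ((real lam * exp (-2) / real n) * real d))
     + 32 * real n / (cX * real lam * real d)"
proof -
  let ?p = "pEA n d"
  let ?a = "real n * exp 2"
  let ?y = "real d * real lam * real lam / (8 * real n)"
  let ?E = "exp (- ((real lam * exp (-2) / real n) * real d))"
  have n: "0 < real n" "0 < real d" "0 < real lam" using assms by auto
  have p: "0 \<le> ?p" "?p \<le> 1" using pEA_pos pEA_le1 assms by (auto intro: less_imp_le)
  have ip: "1 / ?p = ?a / real d"
    using n by (simp add: pEA_def exp_minus field_simps)
  have T1: "min (real (lam - 0)) (1 / ?p) \<le> 2 * ?a / (real d + ?a / real lam)"
    unfolding ip using n by (simp add: min_bound)
  have pw: "(1 - ?p) ^ (lam - 0) \<le> ?E"
  proof -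
    have "(1 - ?p) ^ lam \<le> exp (- (?p * real lam))" by (rule one_minus_pow_le_exp[OF p])
    also have "?p * real lam = (real lam * exp (-2) / real n) * real d" by (simp add: pEA_def)
    finally show ?thesis by simp
  qed
  have y: "0 < ?y" using n by simp
  have q: "2 * real lam / qGA n lam d = (4 * real lam / cX) * (1 / (1 - exp (- ?y)))"
    using cX_pos by (simp add: qGA_def field_simps)
  have E: "0 \<le> ?E" "?E \<le> 1" using n by auto
  have G0: "0 \<le> 4 * real lam / cX" using cX_pos by simp
  have "(1 - ?p) ^ (lam - 0) * (2 * real lam / qGA n lam d) \<le> ?E * ((4 * real lam / cX) * (1 + 1 / ?y))"
  proof -
    have "0 \<le> 2 * real lam / qGA n lam d" using qGA_pos[of d n lam] assms by simp
    moreover have "2 * real lam / qGA n lam d \<le> (4 * real lam / cX) * (1 + 1 / ?y)"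
      unfolding q using G0 inv_one_minus_exp[OF y] by (intro mult_left_mono) auto
    ultimately show ?thesis using pw E by (intro mult_mono) auto
  qed
  also have "\<dots> = (4 * real lam / cX) * ?E + ?E * ((4 * real lam / cX) / ?y)"
    by (simp add: algebra_simps)
  also have "\<dots> \<le> (4 * real lam / cX) * ?E + 1 * ((4 * real lam / cX) / ?y)"
  proof -
    have "0 \<le> (4 * real lam / cX) / ?y" using G0 y cX_pos by (intro divide_nonneg_pos) auto
    then show ?thesis using E by (intro add_left_mono mult_right_mono) auto
  qed
  also have "(4 * real lam / cX) / ?y = 32 * real n / (cX * real lam * real d)"
    using n cX_pos by (simp add: field_simps)
  finally have T2: "(1 - ?p) ^ (lam - 0) * (2 * real lam / qGA n lam d) \<le>
     (4 * real lam / cX) * ?E + 32 * real n / (cX * real lam * real d)" by simp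
  show ?thesis unfolding hval_def using T1 T2 by linarith
qed



lemma Ssum_bound:
  assumes "1 \<le> n" "1 \<le> lam"
  shows "Ssum n lam (Suc n) \<le> 2 * exp 2 * real n * ln (1 + real lam) + 4 * exp 2 * real n / cX
     + 64 * real n * ln (real n + 1) / (cX * real lam)"
proof -
  let ?a = "real n * exp 2"
  let ?b = "?a / real lam"
  let ?t = "real lam * exp (-2) / real n"
  have n: "0 < real n" "0 < real lam" using assms by auto
  have b: "0 < ?b" using n by simp
  have t: "0 < ?t" using n by simp
  have "Ssum n lam (Suc n) = (\<Sum>d\<in>{1..n}. hval n lam d 0)"
    unfolding Ssum_def by (simp add: atLeastLessThanSuc_atLeastAtMost)
  also have "\<dots> \<le> (\<Sum>d\<in>{1..n}. 2 * ?a * (1 / (real d + ?b))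
     + (4 * real lam / cX) * exp (- (?t * real d))
     + (32 * real n / (cX * real lam)) * (1 / real d))"
  proof (intro sum_mono)
    fix d assume "d \<in> {1..n}"
    then have "hval n lam d 0 \<le> 2 * (real n * exp 2) / (real d + real n * exp 2 / real lam)
     + (4 * real lam / cX) * exp (- ((real lam * exp (-2) / real n) * real d))
     + 32 * real n / (cX * real lam * real d)" using assms by (intro hval_bound) auto
    then show "hval n lam d 0 \<le> 2 * ?a * (1 / (real d + ?b))
     + (4 * real lam / cX) * exp (- (?t * real d))
     + (32 * real n / (cX * real lam)) * (1 / real d)" by simp
  qed
  also have "\<dots> = 2 * ?a * (\<Sum>d\<in>{1..n}. 1 / (real d + ?b))
     + (4 * real lam / cX) * (\<Sum>d\<in>{1..n}. exp (- (?t * real d)))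
     + (32 * real n / (cX * real lam)) * (\<Sum>d\<in>{1..n}. 1 / real d)"
    by (simp add: sum.distrib sum_distrib_left)
  also have "\<dots> \<le> 2 * ?a * ln (1 + real lam)
     + (4 * real lam / cX) * (1 / ?t)
     + (32 * real n / (cX * real lam)) * (2 * ln (real n + 1))"
  proof (intro add_mono mult_left_mono)
    have "(\<Sum>d\<in>{1..n}. 1 / (real d + ?b)) \<le> ln (real n + ?b) - ln ?b" by (rule harm_shift[OF b])
    also have "\<dots> = ln (1 + real lam / exp 2)"
    proof -
      have pos: "0 < real n + ?b" using b n by (intro add_pos_pos)
      have "ln (real n + ?b) - ln ?b = ln ((real n + ?b) / ?b)"
        by (subst ln_div) (use pos b in auto)
      also have "(real n + ?b) / ?b = 1 + real lam / exp 2" using n by (simp add: field_simps)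
      finally show ?thesis .
    qed
    also have "\<dots> \<le> ln (1 + real lam)"
    proof -
      have "real lam / exp 2 \<le> real lam"
        using n by (simp add: divide_le_eq one_le_exp_iff mult_le_cancel_left1)
      moreover have "0 < 1 + real lam / exp 2" using n by (intro add_pos_nonneg) auto
      ultimately show ?thesis by (subst ln_le_cancel_iff) auto
    qed
    finally show "(\<Sum>d\<in>{1..n}. 1 / (real d + ?b)) \<le> ln (1 + real lam)" .
    show "(\<Sum>d\<in>{1..n}. exp (- (?t * real d))) \<le> 1 / ?t" by (rule exp_sum[OF t])
    have "(\<Sum>d\<in>{1..n}. 1 / real d) \<le> (\<Sum>d\<in>{1..n}. 2 * (1 / (real d + 1)))"
      by (intro sum_mono) (auto simp: field_simps)
    also have "\<dots> = 2 * (\<Sum>d\<in>{1..n}. 1 / (real d + 1))" by (simp add: sum_distrib_left)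
    also have "\<dots> \<le> 2 * (ln (real n + 1) - ln 1)"
      using harm_shift[of 1 n] by simp
    finally show "(\<Sum>d\<in>{1..n}. 1 / real d) \<le> 2 * ln (real n + 1)" by simp
  qed (use n cX_pos in auto)
  also have "\<dots> = 2 * exp 2 * real n * ln (1 + real lam) + 4 * exp 2 * real n / cX
     + 64 * real n * ln (real n + 1) / (cX * real lam)"
    using n cX_pos by (simp add: field_simps exp_minus)
  finally show ?thesis .
qed



lemma final_real:
  fixes c1 c2 L LL nn lamr :: real
  assumes c: "0 < c1" "0 < c2" and n: "2 \<le> nn" and L: "L = ln nn" and LL: "LL = ln L" "1 \<le> LL"
    and lam: "c1 * L \<le> lamr" "lamr \<le> c2 * L" "1 \<le> lamr"
  shows "2 * exp 2 * nn * ln (1 + lamr) + 4 * exp 2 * nn / cX + 64 * nn * ln (nn + 1) / (cX * lamr)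
     \<le> (2 * exp 2 * (ln (1 + c2) + 1) + 4 * exp 2 / cX + 128 / (cX * c1)) * nn * LL"
proof -
  have Lpos: "0 < L" using n L by simp
  have L1: "1 \<le> L"
  proof -
    have "exp 1 \<le> exp (ln L)" using LL by simp
    then have "exp 1 \<le> L" using Lpos by simp
    moreover have "(1::real) \<le> exp 1" by simp
    ultimately show ?thesis by linarith
  qed
  have cX: "0 < cX" by (rule cX_pos)
  have t1: "ln (1 + lamr) \<le> (ln (1 + c2) + 1) * LL"
  proof -
    have "1 + lamr \<le> (1 + c2) * L" using lam L1 by (simp add: algebra_simps)
    then have "ln (1 + lamr) \<le> ln ((1 + c2) * L)" using lam by (subst ln_le_cancel_iff) auto
    also have "\<dots> = ln (1 + c2) + LL" using c L1 LL by (simp add: ln_mult)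
    also have "\<dots> \<le> ln (1 + c2) * LL + LL"
    proof -
      have "0 \<le> ln (1 + c2)" using c by simp
      then have "ln (1 + c2) * 1 \<le> ln (1 + c2) * LL" using LL by (intro mult_left_mono) auto
      then show ?thesis by simp
    qed
    finally show ?thesis by (simp add: algebra_simps)
  qed
  have t3: "64 * nn * ln (nn + 1) / (cX * lamr) \<le> 128 / (cX * c1) * nn"
  proof -
    have "2 * nn \<le> nn * nn" using n by (intro mult_right_mono) auto
    then have "nn + 1 \<le> nn ^ 2" using n unfolding power2_eq_square by linarith
    then have "ln (nn + 1) \<le> ln (nn ^ 2)" using n by (subst ln_le_cancel_iff) auto
    also have "\<dots> = 2 * L" using n L by (simp add: ln_realpow)
    finally have l: "ln (nn + 1) \<le> 2 * L" .
    have "64 * nn * ln (nn + 1) / (cX * lamr) \<le> 64 * nn * (2 * L) / (cX * (c1 * L))"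
    proof (rule frac_le)
      show "0 \<le> 64 * nn * (2 * L)" using n L1 by simp
      show "64 * nn * ln (nn + 1) \<le> 64 * nn * (2 * L)" using l n by simp
      show "0 < cX * (c1 * L)" using cX c L1 by simp
      show "cX * (c1 * L) \<le> cX * lamr" using lam cX by simp
    qed
    also have "\<dots> = 128 / (cX * c1) * nn" using L1 c cX by (simp add: field_simps)
    finally show ?thesis .
  qed
  have "2 * exp 2 * nn * ln (1 + lamr) \<le> 2 * exp 2 * nn * ((ln (1 + c2) + 1) * LL)"
    using t1 n by (intro mult_left_mono) auto
  moreover have "4 * exp 2 * nn / cX \<le> 4 * exp 2 / cX * nn * LL"
  proof -
    have "4 * exp 2 / cX * nn * 1 \<le> 4 * exp 2 / cX * nn * LL"
      using LL n cX by (intro mult_left_mono) auto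
    then show ?thesis by simp
  qed
  moreover have "128 / (cX * c1) * nn \<le> 128 / (cX * c1) * nn * LL"
  proof -
    have "128 / (cX * c1) * nn * 1 \<le> 128 / (cX * c1) * nn * LL"
      using LL n cX c by (intro mult_left_mono) auto
    then show ?thesis by simp
  qed
  ultimately show ?thesis using t3 by (simp add: algebra_simps)
qed



theorem theorem6p1:
  fixes lam :: "nat \<Rightarrow> nat"
  assumes "\<forall>n\<ge>1. 1 \<le> lam n \<and> lam n \<le> n"
    and "(\<lambda>n. real (lam n)) \<in> \<Theta>(\<lambda>n. ln (real n))"
  shows "\<exists>C N. \<forall>n\<ge>N. hh_runtime n (lam n) \<le> ennreal (C * real n * ln (ln (real n)))"
proof -
  have O: "(\<lambda>n. real (lam n)) \<in> O(\<lambda>n. ln (real n))" using assms(2) by blast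
  have Om: "(\<lambda>n. real (lam n)) \<in> \<Omega>(\<lambda>n. ln (real n))" using assms(2) by blast
  obtain c2 where c2: "c2 > 0" "eventually (\<lambda>n. norm (real (lam n)) \<le> c2 * norm (ln (real n))) at_top"
    using O by (elim landau_o.bigE)
  obtain c1 where c1: "c1 > 0" "eventually (\<lambda>n. norm (real (lam n)) \<ge> c1 * norm (ln (real n))) at_top"
    using Om by (elim landau_omega.bigE)
  obtain N1 where N1: "\<And>n. n \<ge> N1 \<Longrightarrow> norm (real (lam n)) \<le> c2 * norm (ln (real n))"
    using c2(2) unfolding eventually_at_top_linorder by blast
  obtain N2 where N2: "\<And>n. n \<ge> N2 \<Longrightarrow> norm (real (lam n)) \<ge> c1 * norm (ln (real n))"
    using c1(2) unfolding eventually_at_top_linorder by blast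
  define K where "K = max (exp 1) (8 / c1)"
  define N where "N = max (max N1 N2) (max (nat \<lceil>exp K\<rceil>) 2)"
  define C where "C = 2 * exp 2 * (ln (1 + c2) + 1) + 4 * exp 2 / cX + 128 / (cX * c1)"
  have "\<forall>n\<ge>N. hh_runtime n (lam n) \<le> ennreal (C * real n * ln (ln (real n)))"
  proof (intro allI impI)
    fix n assume nN: "N \<le> n"
    have n2: "2 \<le> n" using nN by (simp add: N_def)
    have "exp K \<le> real n"
    proof -
      have "nat \<lceil>exp K\<rceil> \<le> n" using nN by (simp add: N_def)
      then have "real (nat \<lceil>exp K\<rceil>) \<le> real n" by (simp only: of_nat_le_iff)
      moreover have "exp K \<le> real (nat \<lceil>exp K\<rceil>)" by linarith
      ultimately show ?thesis by linarith
    qed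
    then have lnK: "K \<le> ln (real n)" using n2 by (simp add: ln_ge_iff)
    have Lpos: "0 < ln (real n)" using n2 by simp
    have LL: "1 \<le> ln (ln (real n))"
    proof -
      have "exp 1 \<le> ln (real n)" using lnK by (simp add: K_def)
      then show ?thesis using Lpos by (simp add: ln_ge_iff)
    qed
    have lamU: "real (lam n) \<le> c2 * ln (real n)" using N1[of n] nN Lpos by (simp add: N_def)
    have lamL: "c1 * ln (real n) \<le> real (lam n)" using N2[of n] nN Lpos by (simp add: N_def)
    have "8 / c1 \<le> ln (real n)" using lnK by (simp add: K_def)
    then have "8 \<le> c1 * ln (real n)" using c1 by (simp add: field_simps)
    then have lam8: "8 \<le> lam n" using lamL by linarith
    have lamn: "lam n \<le> n" using assms(1) n2 by simp
    have "hh_runtime n (lam n) \<le> ennreal (Ssum n (lam n) (Suc n))"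
      using hh_runtime_bound[OF n2 lam8 lamn] .
    also have "\<dots> \<le> ennreal (C * real n * ln (ln (real n)))"
    proof (rule ennreal_leI)
      have "Ssum n (lam n) (Suc n) \<le> 2 * exp 2 * real n * ln (1 + real (lam n)) + 4 * exp 2 * real n / cX
          + 64 * real n * ln (real n + 1) / (cX * real (lam n))"
        using Ssum_bound n2 lam8 by simp
      also have "\<dots> \<le> C * real n * ln (ln (real n))"
        unfolding C_def
        by (rule final_real[OF c1(1) c2(1) _ refl refl LL lamL lamU]) (use n2 lam8 in auto)
      finally show "Ssum n (lam n) (Suc n) \<le> C * real n * ln (ln (real n))" .
    qed
    finally show "hh_runtime n (lam n) \<le> ennreal (C * real n * ln (ln (real n)))" .
  qed
  then show ?thesis by blast
qed


end
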